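(* Let $\mathbb{K}$ be a field of characteristic $2$, let $(A,L,\theta)$ be a restricted Lie–Rinehart algebra, let $(M,\rho)$ be a restricted Lie–Rinehart module and let $(\varphi,\omega)\in C^n_{\rm LR}(L;M)$. Then $\mathrm{d}^n_{\rm LR}(\varphi,\omega)\in C^{n+1}_{\rm LR}(L;M)$. Furthermore, $\mathrm{d}^{n+1}_{\rm LR}\circ\mathrm{d}^n_{\rm LR}=0$.
   Context: $\mathbb{K}$ has characteristic $2$. Restricted Lie algebra: Lie algebra with $x\mapsto x^{[2]}$, $(\lambda x)^{[2]}=\lambda^2x^{[2]}$, $\mathrm{ad}_{x^{[2]}}=\mathrm{ad}_x^2$, $(x+y)^{[2]}=x^{[2]}+y^{[2]}+[x,y]$. Restricted Lie–Rinehart algebra $(A,L,\theta)$: $A$ commutative associative, $L$ restricted Lie algebra and $A$-module, $\theta:L\to\mathrm{Der}(A)$ an $A$-linear restricted Lie morphism ($\mathrm{Der}(A)$ with commutator, $D^{[2]}=D^2$) with $[x,ay]=a[x,y]+\theta(x)(a)y$, $(ax)^{[2]}=a^2x^{[2]}+\theta(ax)(a)x$. Restricted Lie–Rinehart module: $A$-module $M$ with restricted Lie morphism $\rho:L\to\mathrm{End}(M)$ (so $\rho(x^{[2]})=\rho(x)^2$) and $\rho(x)(am)=a\rho(x)(m)+\theta(x)(a)m$. Write $x\cdot m=\rho(x)(m)$. $C^0_{\rm LR}(L;M)=M$, $C^1_{\rm LR}(L;M)=\mathrm{Hom}_A(L,M)$; for $n\ge2$, $C^n_{\rm LR}(L;M)$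 consists of pairs $(\varphi,\omega)$ with $\varphi:L^n\to M$ alternating and $A$-multilinear, $\omega:L\times L^{n-2}\to M$ alternating and $\mathbb{K}$-multilinear in the last $n-2$ arguments, such that for $z=(z_2,..,z_{n-1})$: $\omega(\lambda x,z)=\lambda^2\omega(x,z)$ ($\lambda\in\mathbb{K}$), $\omega(x+y,z)=\omega(x,z)+\omega(y,z)+\varphi(x,y,z)$, $\omega(ax,z)=a^2\omega(x,z)$ and $\omega(x,z_2,..,az_i,..)=a\,\omega(x,z_2,..,z_i,..)$ ($a\in A$). Differentials: $\mathrm{d}^0(m)(x)=x\cdot m$; $\mathrm{d}^1\psi=(\mathrm{d}_{\rm CE}\psi,\delta^1\psi)$, $\delta^1\psi(x)=\psi(x^{[2]})+x\cdot\psi(x)$; for $n\ge2$ $\mathrm{d}^n(\varphi,\omega)=(\mathrm{d}_{\rm CE}\varphi,\delta^n\omega)$ with $\mathrm{d}_{\rm CE}\varphi(x_1,..,x_{n+1})=\sum_{i<j}\varphi([x_i,x_j],x_1,..,\hat x_i,..,\hat x_j,..)+\sum_ix_i\cdot\varphi(x_1,..,\hat x_i,..)$ and $\delta^n\omega(x,z_2,..,z_n)=x\cdot\varphi(x,z_2,..,z_n)+\sum_{i=2}^nz_i\cdot\omega(x,..,\hat z_i,..)+\varphi(x^{[2]},z_2,..,z_n)+\sum_{i=2}^n\varphi([x,z_i],x,z_2,..,\hat z_i,..,z_n)+\sum_{2\le i<j\le n}\omega(x,[z_i,z_j],z_2,..,\hat z_i,..,\hat z_j,..,z_n)$. *)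

theory Defs
  imports Main
begin

text \<open>The commutative
associative unital K-algebra A is a type 'a of class comm_ring_1 together with a
ring homomorphism iota from 'k to 'a (the K-vector space structure of A is
c.a = iota c * a). L and M are abelian groups with A-module structures smL, smM;
their K-vector space structures are induced by iota. Elements of L^n are lists
of length n.\<close>

definition ring_hom_K :: "('k::field \<Rightarrow> 'a::comm_ring_1) \<Rightarrow> bool" where
  "ring_hom_K \<iota> \<longleftrightarrow> \<iota> 1 = 1 \<and> (\<forall>c d. \<iota> (c + d) = \<iota> c + \<iota> d) \<and> (\<forall>c d. \<iota> (c * d) = \<iota> c * \<iota> d)"

definition is_module :: "('a::comm_ring_1 \<Rightarrow> 'v::ab_group_add \<Rightarrow> 'v) \<Rightarrow> bool" where
  "is_module sm \<longleftrightarrow>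
     (\<forall>a x y. sm a (x + y) = sm a x + sm a y) \<and>
     (\<forall>a b x. sm (a + b) x = sm a x + sm b x) \<and>
     (\<forall>a b x. sm (a * b) x = sm a (sm b x)) \<and>
     (\<forall>x. sm 1 x = x)"

text \<open>Restricted Lie algebra over K (char 2) on L, K-structure induced by iota.\<close>
definition restricted_Lie_algebra ::
  "('k::field \<Rightarrow> 'a::comm_ring_1) \<Rightarrow> ('a \<Rightarrow> 'l::ab_group_add \<Rightarrow> 'l) \<Rightarrow>
   ('l \<Rightarrow> 'l \<Rightarrow> 'l) \<Rightarrow> ('l \<Rightarrow> 'l) \<Rightarrow> bool" where
  "restricted_Lie_algebra \<iota> smL br sq \<longleftrightarrow>
     (\<forall>x y z. br (x + y) z = br x z + br y z) \<and>
     (\<forall>x y z. br x (y + z) = br x y + br x z) \<and>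
     (\<forall>c x y. br (smL (\<iota> c) x) y = smL (\<iota> c) (br x y)) \<and>
     (\<forall>c x y. br x (smL (\<iota> c) y) = smL (\<iota> c) (br x y)) \<and>
     (\<forall>x. br x x = 0) \<and>
     (\<forall>x y z. br x (br y z) + br y (br z x) + br z (br x y) = 0) \<and>
     (\<forall>c x. sq (smL (\<iota> c) x) = smL (\<iota> (c ^ 2)) (sq x)) \<and>
     (\<forall>x y. br (sq x) y = br x (br x y)) \<and>
     (\<forall>x y. sq (x + y) = sq x + sq y + br x y)"

definition is_derivation :: "('k::field \<Rightarrow> 'a::comm_ring_1) \<Rightarrow> ('a \<Rightarrow> 'a) \<Rightarrow> bool" where
  "is_derivation \<iota> D \<longleftrightarrow>
     (\<forall>a b. D (a + b) = D a + D b) \<and>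
     (\<forall>c a. D (\<iota> c * a) = \<iota> c * D a) \<and>
     (\<forall>a b. D (a * b) = a * D b + D a * b)"

definition restricted_LR_algebra ::
  "('k::field \<Rightarrow> 'a::comm_ring_1) \<Rightarrow> ('a \<Rightarrow> 'l::ab_group_add \<Rightarrow> 'l) \<Rightarrow>
   ('l \<Rightarrow> 'l \<Rightarrow> 'l) \<Rightarrow> ('l \<Rightarrow> 'l) \<Rightarrow> ('l \<Rightarrow> 'a \<Rightarrow> 'a) \<Rightarrow> bool" where
  "restricted_LR_algebra \<iota> smL br sq \<theta> \<longleftrightarrow>
     ring_hom_K \<iota> \<and> is_module smL \<and> restricted_Lie_algebra \<iota> smL br sq \<and>
     (\<forall>x. is_derivation \<iota> (\<theta> x)) \<and>
     (\<forall>x y. \<theta> (x + y) = (\<lambda>b. \<theta> x b + \<theta> y b)) \<and>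
     (\<forall>a x. \<theta> (smL a x) = (\<lambda>b. a * \<theta> x b)) \<and>
     (\<forall>x y. \<theta> (br x y) = (\<lambda>b. \<theta> x (\<theta> y b) - \<theta> y (\<theta> x b))) \<and>
     (\<forall>x. \<theta> (sq x) = (\<lambda>b. \<theta> x (\<theta> x b))) \<and>
     (\<forall>x a y. br x (smL a y) = smL a (br x y) + smL (\<theta> x a) y) \<and>
     (\<forall>a x. sq (smL a x) = smL (a ^ 2) (sq x) + smL (\<theta> (smL a x) a) x)"

definition restricted_LR_module ::
  "('k::field \<Rightarrow> 'a::comm_ring_1) \<Rightarrow> ('a \<Rightarrow> 'l::ab_group_add \<Rightarrow> 'l) \<Rightarrow>
   ('l \<Rightarrow> 'l \<Rightarrow> 'l) \<Rightarrow> ('l \<Rightarrow> 'l) \<Rightarrow> ('l \<Rightarrow> 'a \<Rightarrow> 'a) \<Rightarrow>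
   ('a \<Rightarrow> 'm::ab_group_add \<Rightarrow> 'm) \<Rightarrow> ('l \<Rightarrow> 'm \<Rightarrow> 'm) \<Rightarrow> bool" where
  "restricted_LR_module \<iota> smL br sq \<theta> smM \<rho> \<longleftrightarrow>
     is_module smM \<and>
     (\<forall>x m n. \<rho> x (m + n) = \<rho> x m + \<rho> x n) \<and>
     (\<forall>x c m. \<rho> x (smM (\<iota> c) m) = smM (\<iota> c) (\<rho> x m)) \<and>
     (\<forall>x y m. \<rho> (x + y) m = \<rho> x m + \<rho> y m) \<and>
     (\<forall>a x m. \<rho> (smL a x) m = smM a (\<rho> x m)) \<and>
     (\<forall>x y m. \<rho> (br x y) m = \<rho> x (\<rho> y m) - \<rho> y (\<rho> x m)) \<and>
     (\<forall>x m. \<rho> (sq x) m = \<rho> x (\<rho> x m)) \<and>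
     (\<forall>x a m. \<rho> x (smM a m) = smM a (\<rho> x m) + smM (\<theta> x a) m)"

definition del :: "nat \<Rightarrow> 'b list \<Rightarrow> 'b list" where
  "del i xs = take i xs @ drop (Suc i) xs"

definition alternating_on :: "nat \<Rightarrow> ('l list \<Rightarrow> 'm::zero) \<Rightarrow> bool" where
  "alternating_on n f \<longleftrightarrow>
     (\<forall>xs i j. length xs = n \<longrightarrow> i < j \<longrightarrow> j < n \<longrightarrow> xs ! i = xs ! j \<longrightarrow> f xs = 0)"

definition multilinear_on ::
  "'a set \<Rightarrow> ('a \<Rightarrow> 'l::ab_group_add \<Rightarrow> 'l) \<Rightarrow> ('a \<Rightarrow> 'm::ab_group_add \<Rightarrow> 'm) \<Rightarrow>
   nat \<Rightarrow> ('l list \<Rightarrow> 'm) \<Rightarrow> bool" where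
  "multilinear_on S smL smM n f \<longleftrightarrow>
     (\<forall>us vs x y. length us + length vs + 1 = n \<longrightarrow>
        f (us @ (x + y) # vs) = f (us @ x # vs) + f (us @ y # vs)) \<and>
     (\<forall>us vs x a. length us + length vs + 1 = n \<longrightarrow> a \<in> S \<longrightarrow>
        f (us @ smL a x # vs) = smM a (f (us @ x # vs)))"

definition LR_C1 :: "('a::comm_ring_1 \<Rightarrow> 'l::ab_group_add \<Rightarrow> 'l) \<Rightarrow> ('a \<Rightarrow> 'm::ab_group_add \<Rightarrow> 'm) \<Rightarrow>
   ('l \<Rightarrow> 'm) \<Rightarrow> bool" where
  "LR_C1 smL smM \<psi> \<longleftrightarrow> (\<forall>x y. \<psi> (x + y) = \<psi> x + \<psi> y) \<and> (\<forall>a x. \<psi> (smL a x) = smM a (\<psi> x))"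

text \<open>C^n for n \<ge> 2: pairs (phi, omega); omega x zs with length zs = n - 2.\<close>
definition LR_cochain ::
  "('k::field \<Rightarrow> 'a::comm_ring_1) \<Rightarrow> ('a \<Rightarrow> 'l::ab_group_add \<Rightarrow> 'l) \<Rightarrow> ('a \<Rightarrow> 'm::ab_group_add \<Rightarrow> 'm) \<Rightarrow>
   nat \<Rightarrow> ('l list \<Rightarrow> 'm) \<times> ('l \<Rightarrow> 'l list \<Rightarrow> 'm) \<Rightarrow> bool" where
  "LR_cochain \<iota> smL smM n c \<longleftrightarrow> (case c of (\<phi>, \<omega>) \<Rightarrow>
     alternating_on n \<phi> \<and> multilinear_on UNIV smL smM n \<phi> \<and>
     (\<forall>x. alternating_on (n - 2) (\<omega> x) \<and> multilinear_on (range \<iota>) smL smM (n - 2) (\<omega> x)) \<and>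
     (\<forall>c x zs. length zs = n - 2 \<longrightarrow> \<omega> (smL (\<iota> c) x) zs = smM (\<iota> (c ^ 2)) (\<omega> x zs)) \<and>
     (\<forall>x y zs. length zs = n - 2 \<longrightarrow> \<omega> (x + y) zs = \<omega> x zs + \<omega> y zs + \<phi> (x # y # zs)) \<and>
     (\<forall>a x zs. length zs = n - 2 \<longrightarrow> \<omega> (smL a x) zs = smM (a ^ 2) (\<omega> x zs)) \<and>
     (\<forall>a x us vs z. length us + length vs + 1 = n - 2 \<longrightarrow>
        \<omega> x (us @ smL a z # vs) = smM a (\<omega> x (us @ z # vs))))"

definition LR_zero :: "nat \<Rightarrow> ('l list \<Rightarrow> 'm::zero) \<times> ('l \<Rightarrow> 'l list \<Rightarrow> 'm) \<Rightarrow> bool" where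
  "LR_zero n c \<longleftrightarrow> (case c of (\<phi>, \<omega>) \<Rightarrow>
     (\<forall>xs. length xs = n \<longrightarrow> \<phi> xs = 0) \<and> (\<forall>x zs. length zs = n - 2 \<longrightarrow> \<omega> x zs = 0))"

definition dCE :: "('l \<Rightarrow> 'm \<Rightarrow> 'm::ab_group_add) \<Rightarrow> ('l \<Rightarrow> 'l \<Rightarrow> 'l) \<Rightarrow> ('l list \<Rightarrow> 'm) \<Rightarrow> 'l list \<Rightarrow> 'm" where
  "dCE \<rho> br \<phi> xs =
     (\<Sum>j<length xs. \<Sum>i<j. \<phi> (br (xs ! i) (xs ! j) # del i (del j xs))) +
     (\<Sum>i<length xs. \<rho> (xs ! i) (\<phi> (del i xs)))"

text \<open>delta^n omega (x, z_2, ..., z_n); zs = [z_2, ..., z_n].\<close>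
definition deltaLR :: "('l \<Rightarrow> 'm \<Rightarrow> 'm::ab_group_add) \<Rightarrow> ('l \<Rightarrow> 'l \<Rightarrow> 'l) \<Rightarrow> ('l \<Rightarrow> 'l) \<Rightarrow>
   ('l list \<Rightarrow> 'm) \<Rightarrow> ('l \<Rightarrow> 'l list \<Rightarrow> 'm) \<Rightarrow> 'l \<Rightarrow> 'l list \<Rightarrow> 'm" where
  "deltaLR \<rho> br sq \<phi> \<omega> x zs =
     \<rho> x (\<phi> (x # zs)) +
     (\<Sum>i<length zs. \<rho> (zs ! i) (\<omega> x (del i zs))) +
     \<phi> (sq x # zs) +
     (\<Sum>i<length zs. \<phi> (br x (zs ! i) # x # del i zs)) +
     (\<Sum>j<length zs. \<Sum>i<j. \<omega> x (br (zs ! i) (zs ! j) # del i (del j zs)))"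

definition d0 :: "('l \<Rightarrow> 'm \<Rightarrow> 'm) \<Rightarrow> 'm \<Rightarrow> 'l \<Rightarrow> 'm" where
  "d0 \<rho> m = (\<lambda>x. \<rho> x m)"

definition d1 :: "('l \<Rightarrow> 'm \<Rightarrow> 'm::ab_group_add) \<Rightarrow> ('l \<Rightarrow> 'l \<Rightarrow> 'l) \<Rightarrow> ('l \<Rightarrow> 'l) \<Rightarrow>
   ('l \<Rightarrow> 'm) \<Rightarrow> ('l list \<Rightarrow> 'm) \<times> ('l \<Rightarrow> 'l list \<Rightarrow> 'm)" where
  "d1 \<rho> br sq \<psi> = (dCE \<rho> br (\<lambda>xs. \<psi> (hd xs)), (\<lambda>x zs. \<psi> (sq x) + \<rho> x (\<psi> x)))"

text \<open>d^n for n \<ge> 2.\<close>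
definition dLR :: "('l \<Rightarrow> 'm \<Rightarrow> 'm::ab_group_add) \<Rightarrow> ('l \<Rightarrow> 'l \<Rightarrow> 'l) \<Rightarrow> ('l \<Rightarrow> 'l) \<Rightarrow>
   ('l list \<Rightarrow> 'm) \<times> ('l \<Rightarrow> 'l list \<Rightarrow> 'm) \<Rightarrow> ('l list \<Rightarrow> 'm) \<times> ('l \<Rightarrow> 'l list \<Rightarrow> 'm)" where
  "dLR \<rho> br sq c = (case c of (\<phi>, \<omega>) \<Rightarrow> (dCE \<rho> br \<phi>, deltaLR \<rho> br sq \<phi> \<omega>))"

end

theory Submission
  imports Defs "HOL-Combinatorics.Permutations"
begin


definition GG :: "(nat \<Rightarrow> 'l) \<Rightarrow> nat set \<Rightarrow> 'l multiset" where
  "GG g K = image_mset g (mset_set K)"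

definition psum :: "nat set \<Rightarrow> (nat \<Rightarrow> nat \<Rightarrow> 'm::comm_monoid_add) \<Rightarrow> 'm" where
  "psum K F = (\<Sum>b\<in>K. \<Sum>a\<in>{a\<in>K. a<b}. F a b)"

lemma GG_insert: "finite K \<Longrightarrow> k \<notin> K \<Longrightarrow> GG g (insert k K) = add_mset (g k) (GG g K)"
  by (simp add: GG_def)

lemma GG_diff_insert: "finite K \<Longrightarrow> k \<notin> K \<Longrightarrow>
  GG g (insert k K - S) = (if k \<in> S then GG g (K - S) else add_mset (g k) (GG g (K - S)))"
proof (cases "k \<in> S")
  case True
  assume "finite K" "k \<notin> K"
  then have "insert k K - S = K - S" using True by auto
  then show ?thesis using True by simp
next
  case False
  assume "finite K" "k \<notin> K"
  then have "insert k K - S = insert k (K - S)" using False by auto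
  then show ?thesis using False \<open>finite K\<close> \<open>k \<notin> K\<close> by (simp add: GG_insert)
qed

lemma GG_cong: "(\<And>x. x \<in> K \<Longrightarrow> g x = h x) \<Longrightarrow> GG g K = GG h K"
  unfolding GG_def
  by (cases "finite K") (auto intro!: image_mset_cong)

lemma GG_upd: "k \<notin> K \<Longrightarrow> GG (g(k:=u)) K = GG g K"
  by (rule GG_cong) auto

lemma GG_map: "distinct l \<Longrightarrow> mset (map g l) = GG g (set l)"
  by (simp add: GG_def mset_set_set)

lemma GG_nth: "GG (nth xs) {..<length xs} = mset xs"
proof -
  have "GG (nth xs) {..<length xs} = mset (map (nth xs) [0..<length xs])"
    by (subst GG_map) (auto simp: atLeast0LessThan)
  then show ?thesis by (simp add: map_nth)
qed

lemma GG_size: "size (GG g K) = card K"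
  by (simp add: GG_def)

lemma GG_empty[simp]: "GG g {} = {#}"
  by (simp add: GG_def)

lemma del_length[simp]: "i < length xs \<Longrightarrow> length (del i xs) = length xs - 1"
  by (simp add: del_def)

lemma del_map: "del i (map g l) = map g (del i l)"
  by (simp add: del_def drop_map take_map)

lemma del_nth_lt: "i < j \<Longrightarrow> j < length xs \<Longrightarrow> del j xs ! i = xs ! i"
  by (simp add: del_def nth_append)

lemma del_distinct: "distinct l \<Longrightarrow> distinct (del i l)"
  unfolding del_def
  by (metis distinct_append distinct_drop distinct_take id_take_nth_drop
      set_drop_subset_set_drop Suc_n_not_le_n not_less_eq_eq subset_iff disjoint_iff
      set_take_disj_set_drop_if_distinct le_refl le_SucI)

lemma del_set: "distinct l \<Longrightarrow> i < length l \<Longrightarrow> set (del i l) = set l - {l ! i}"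
proof -
  assume d: "distinct l" and i: "i < length l"
  have l: "l = take i l @ l ! i # drop (Suc i) l" using i by (simp add: id_take_nth_drop)
  have "distinct (take i l @ l ! i # drop (Suc i) l)" using d l by metis
  then show ?thesis unfolding del_def
    by (subst (3) l) auto
qed

lemma del_mset: "i < length xs \<Longrightarrow> mset (del i xs) = mset xs - {# xs ! i #}"
proof -
  assume i: "i < length xs"
  have l: "xs = take i xs @ xs ! i # drop (Suc i) xs" using i by (simp add: id_take_nth_drop)
  show ?thesis unfolding del_def by (subst (3) l) simp
qed

lemma sum_distinct_nth: "distinct l \<Longrightarrow> (\<Sum>i<length l. f (l!i)) = (\<Sum>a\<in>set l. f a)"
proof (induction l rule: rev_induct)
  case Nil
  then show ?case by simp
next
  case (snoc x xs)
  then show ?case by (simp add: nth_append add.commute)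
qed

lemma psum_insert:
  assumes "finite K" "k \<notin> K" "\<And>a. a \<in> K \<Longrightarrow> F k a = F a k"
  shows "psum (insert k K) F = (\<Sum>a\<in>K. F a k) + psum K F"
proof -
  have 1: "psum (insert k K) F = (\<Sum>a\<in>{a\<in>K. a<k}. F a k) +
     (\<Sum>b\<in>K. \<Sum>a\<in>{a\<in>insert k K. a<b}. F a b)"
  proof -
    have e: "{a\<in>insert k K. a<k} = {a\<in>K. a<k}" by auto
    show ?thesis unfolding psum_def sum.insert[OF assms(1,2)] e ..
  qed
  have 2: "(\<Sum>a\<in>{a\<in>insert k K. a<b}. F a b) = (if k < b then F k b else 0) + (\<Sum>a\<in>{a\<in>K. a<b}. F a b)"
    if "b \<in> K" for b
  proof (cases "k < b")
    case True
    then have "{a\<in>insert k K. a<b} = insert k {a\<in>K. a<b}" by auto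
    then show ?thesis using True assms(1,2) by simp
  next
    case False
    then have "{a\<in>insert k K. a<b} = {a\<in>K. a<b}" by auto
    then show ?thesis using False by simp
  qed
  have 3: "(\<Sum>b\<in>K. \<Sum>a\<in>{a\<in>insert k K. a<b}. F a b) =
      (\<Sum>b\<in>K. if k < b then F k b else 0) + psum K F"
    unfolding psum_def by (subst sum.cong[OF refl 2], assumption) (simp add: sum.distrib)
  have 4: "(\<Sum>b\<in>K. if k < b then F k b else 0) = (\<Sum>a\<in>{a\<in>K. k<a}. F a k)"
    using assms by (simp add: sum.inter_filter) (rule sum.cong, auto)
  have 5: "(\<Sum>a\<in>K. F a k) = (\<Sum>a\<in>{a\<in>K. a<k}. F a k) + (\<Sum>a\<in>{a\<in>K. k<a}. F a k)"
  proof -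
    have "K = {a\<in>K. a<k} \<union> {a\<in>K. k<a}" using assms(2) by (auto simp: not_less_iff_gr_or_eq)
    moreover have "{a\<in>K. a<k} \<inter> {a\<in>K. k<a} = {}" by auto
    ultimately show ?thesis using assms(1)
      by (metis (no_types, lifting) finite_Un sum.union_disjoint)
  qed
  show ?thesis using 1 3 4 5 by (simp add: add.assoc)
qed

lemma pair_sum:
  assumes "distinct l" "\<And>a b. F a b = F b a"
  shows "(\<Sum>j<length l. \<Sum>i<j. F (l!i) (l!j)) = psum (set l) F"
  using assms(1)
proof (induction l rule: rev_induct)
  case Nil
  then show ?case by (simp add: psum_def)
next
  case (snoc x xs)
  have "(\<Sum>j<length (xs@[x]). \<Sum>i<j. F ((xs@[x])!i) ((xs@[x])!j)) =
     (\<Sum>j<length xs. \<Sum>i<j. F ((xs@[x])!i) ((xs@[x])!j)) + (\<Sum>i<length xs. F (xs!i) x)"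
    by (simp add: nth_append)
  also have "(\<Sum>j<length xs. \<Sum>i<j. F ((xs@[x])!i) ((xs@[x])!j)) = (\<Sum>j<length xs. \<Sum>i<j. F (xs!i) (xs!j))"
    by (intro sum.cong refl) (simp add: nth_append)
  also have "(\<Sum>i<length xs. F (xs!i) x) = (\<Sum>a\<in>set xs. F a x)"
    using snoc sum_distinct_nth[of xs "\<lambda>a. F a x"] by simp
  finally show ?case using snoc
    by (simp add: psum_insert assms(2) add.commute)
qed



lemma perm_ex:
  assumes "mset xs = mset ys"
  shows "\<exists>l. distinct l \<and> set l = {..<length xs} \<and> ys = map (nth xs) l"
proof -
  from assms[symmetric] obtain p where p: "p permutes {..<length xs}" "permute_list p xs = ys"
    by (rule mset_eq_permutation)
  define l where "l = map p [0..<length xs]"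
  have "inj_on p {..<length xs}" using p(1) permutes_inj_on by blast
  then have "distinct l" unfolding l_def by (simp add: distinct_map atLeast0LessThan)
  moreover have "set l = {..<length xs}" unfolding l_def using permutes_image[OF p(1)]
    by (simp add: atLeast0LessThan)
  moreover have "ys = map (nth xs) l" unfolding l_def using p(2)
    by (auto simp add: permute_list_def o_def)
  ultimately show ?thesis by blast
qed

definition Mof :: "('l list \<Rightarrow> 'm) \<Rightarrow> 'l multiset \<Rightarrow> 'm" where
  "Mof f X = f (SOME xs. mset xs = X)"

lemma Mof_list:
  fixes f :: "'l list \<Rightarrow> 'm" and R :: "(nat \<Rightarrow> 'l) \<Rightarrow> nat set \<Rightarrow> 'm"
  assumes "\<And>g l. distinct l \<Longrightarrow> f (map g l) = R g (set l)"
  shows "f xs = Mof f (mset xs)"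
proof -
  have "\<exists>ys. mset ys = mset xs" by blast
  then have e: "mset (SOME ys. mset ys = mset xs) = mset xs" by (rule someI_ex)
  have H: "f ys = f xs" if m: "mset xs = mset ys" for ys
  proof -
    obtain l where l: "distinct l" "set l = {..<length xs}" "ys = map (nth xs) l"
      using perm_ex[OF m] by blast
    have "f ys = R (nth xs) {..<length xs}" using assms[OF l(1)] l by simp
    also have "\<dots> = f (map (nth xs) [0..<length xs])"
      using assms[of "[0..<length xs]" "nth xs"] by (simp add: atLeast0LessThan)
    finally show ?thesis by (simp add: map_nth)
  qed
  show ?thesis unfolding Mof_def using H[OF e[symmetric]] by simp
qed

lemma Mof_GG:
  fixes f :: "'l list \<Rightarrow> 'm" and R :: "(nat \<Rightarrow> 'l) \<Rightarrow> nat set \<Rightarrow> 'm"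
  assumes "\<And>g l. distinct l \<Longrightarrow> f (map g l) = R g (set l)" "finite K"
  shows "Mof f (GG g K) = R g K"
proof -
  have "Mof f (GG g K) = Mof f (mset (map g (sorted_list_of_set K)))"
    by (simp add: GG_def) (metis mset_sorted_list_of_multiset sorted_list_of_mset_set)
  also have "\<dots> = f (map g (sorted_list_of_set K))"
    by (rule Mof_list[of f R, OF assms(1), symmetric])
  also have "\<dots> = R g K" using assms by simp
  finally show ?thesis .
qed

lemma mset_GG_ex: "\<exists>g K. finite K \<and> X = GG g K"
proof -
  obtain xs where x: "mset xs = X" using ex_mset by metis
  have "finite {..<length xs} \<and> X = GG (nth xs) {..<length xs}" using x GG_nth[of xs] by simp
  then show ?thesis by (intro exI)
qed



lemma psum_ind: "finite K \<Longrightarrow> psum K F = (\<Sum>b\<in>K. \<Sum>a\<in>K. if a < b then F a b else 0)"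
  unfolding psum_def by (simp add: sum.inter_filter)

lemma sum_diff1_ind: "finite K \<Longrightarrow> (\<Sum>m\<in>K - {a}. f m) = (\<Sum>m\<in>K. if m \<noteq> a then f m else 0)"
proof -
  assume "finite K"
  have "K - {a} = {m\<in>K. m \<noteq> a}" by auto
  then show ?thesis using \<open>finite K\<close> by (simp add: sum.inter_filter)
qed

lemma sum_diff2_ind: "finite K \<Longrightarrow> (\<Sum>m\<in>K - {a,b}. f m) = (\<Sum>m\<in>K. if m \<noteq> a \<and> m \<noteq> b then f m else 0)"
proof -
  assume "finite K"
  have "K - {a,b} = {m\<in>K. m \<noteq> a \<and> m \<noteq> b}" by auto
  then show ?thesis using \<open>finite K\<close> by (simp add: sum.inter_filter)
qed

lemma sum_if_const: "(if P then sum f A else 0) = (\<Sum>x\<in>A. if P then f x else 0)"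
  by simp

lemma if_neq_split: "(if (l::nat) \<noteq> m then x else (0::'m::comm_monoid_add)) = (if l < m then x else 0) + (if m < l then x else 0)"
  by (cases "l < m"; cases "m < l") auto

lemma if_add0: "(if c then x + y else (0::'m::comm_monoid_add)) = (if c then x else 0) + (if c then y else 0)"
  by simp

lemma R1:
  fixes F :: "nat \<Rightarrow> nat \<Rightarrow> 'm::ab_group_add"
  assumes K: "finite K"
  shows "(\<Sum>m\<in>K. \<Sum>l\<in>K - {m}. F m l) = psum K (\<lambda>a b. F a b + F b a)"
proof -
  have "(\<Sum>m\<in>K. \<Sum>l\<in>K - {m}. F m l) = (\<Sum>m\<in>K. \<Sum>l\<in>K. (if l < m then F m l else 0) + (if m < l then F m l else 0))"
    using K by (simp only: sum_diff1_ind) (intro sum.cong refl, rule if_neq_split)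
  also have "\<dots> = (\<Sum>m\<in>K. \<Sum>l\<in>K. if l < m then F m l else 0) + (\<Sum>m\<in>K. \<Sum>l\<in>K. if m < l then F m l else 0)"
    by (simp add: sum.distrib)
  also have "(\<Sum>m\<in>K. \<Sum>l\<in>K. if m < l then F m l else 0) = (\<Sum>l\<in>K. \<Sum>m\<in>K. if m < l then F m l else 0)"
    by (rule sum.swap)
  also have "(\<Sum>m\<in>K. \<Sum>l\<in>K. if l < m then F m l else 0) + (\<Sum>l\<in>K. \<Sum>m\<in>K. if m < l then F m l else 0)
      = psum K (\<lambda>a b. F a b + F b a)"
    using K by (simp only: psum_ind if_add0 sum.distrib add.commute)
  finally show ?thesis .
qed


lemma perm3_cyc: "(\<Sum>x\<in>A. \<Sum>y\<in>A. \<Sum>z\<in>A. f x y z) = (\<Sum>z\<in>A. \<Sum>x\<in>A. \<Sum>y\<in>A. f x y z)"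
proof -
  have "(\<Sum>x\<in>A. \<Sum>y\<in>A. \<Sum>z\<in>A. f x y z) = (\<Sum>x\<in>A. \<Sum>z\<in>A. \<Sum>y\<in>A. f x y z)"
    by (rule sum.cong[OF refl], rule sum.swap)
  also have "\<dots> = (\<Sum>z\<in>A. \<Sum>x\<in>A. \<Sum>y\<in>A. f x y z)" by (rule sum.swap)
  finally show ?thesis .
qed

lemma perm3_in: "(\<Sum>x\<in>A. \<Sum>y\<in>A. \<Sum>z\<in>A. f x y z) = (\<Sum>x\<in>A. \<Sum>z\<in>A. \<Sum>y\<in>A. f x y z)"
  by (rule sum.cong[OF refl], rule sum.swap)

lemma perm4: "(\<Sum>x\<in>A. \<Sum>y\<in>A. \<Sum>z\<in>A. \<Sum>w\<in>A. f x y z w) = (\<Sum>z\<in>A. \<Sum>w\<in>A. \<Sum>x\<in>A. \<Sum>y\<in>A. f x y z w)"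
proof -
  have "(\<Sum>x\<in>A. \<Sum>y\<in>A. \<Sum>z\<in>A. \<Sum>w\<in>A. f x y z w) = (\<Sum>x\<in>A. \<Sum>z\<in>A. \<Sum>w\<in>A. \<Sum>y\<in>A. f x y z w)"
  proof (rule sum.cong[OF refl])
    fix x assume "x \<in> A"
    have "(\<Sum>y\<in>A. \<Sum>z\<in>A. \<Sum>w\<in>A. f x y z w) = (\<Sum>z\<in>A. \<Sum>y\<in>A. \<Sum>w\<in>A. f x y z w)" by (rule sum.swap)
    also have "\<dots> = (\<Sum>z\<in>A. \<Sum>w\<in>A. \<Sum>y\<in>A. f x y z w)" by (rule sum.cong[OF refl], rule sum.swap)
    finally show "(\<Sum>y\<in>A. \<Sum>z\<in>A. \<Sum>w\<in>A. f x y z w) = (\<Sum>z\<in>A. \<Sum>w\<in>A. \<Sum>y\<in>A. f x y z w)" .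
  qed
  also have "\<dots> = (\<Sum>z\<in>A. \<Sum>x\<in>A. \<Sum>w\<in>A. \<Sum>y\<in>A. f x y z w)" by (rule sum.swap)
  also have "\<dots> = (\<Sum>z\<in>A. \<Sum>w\<in>A. \<Sum>x\<in>A. \<Sum>y\<in>A. f x y z w)" by (rule sum.cong[OF refl], rule sum.swap)
  finally show ?thesis .
qed

lemma R3:
  fixes H :: "nat \<Rightarrow> nat \<Rightarrow> nat \<Rightarrow> 'm::ab_group_add"
  assumes K: "finite K"
  shows "psum K (\<lambda>a b. \<Sum>m\<in>K - {a,b}. H m a b) = (\<Sum>m\<in>K. psum (K - {m}) (\<lambda>a b. H m a b))"
proof -
  have "psum K (\<lambda>a b. \<Sum>m\<in>K - {a,b}. H m a b) =
    (\<Sum>b\<in>K. \<Sum>a\<in>K. \<Sum>m\<in>K. if a < b \<and> m \<noteq> a \<and> m \<noteq> b then H m a b else 0)"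
    using K by (simp add: psum_ind sum_diff2_ind sum_if_const if_if_eq_conj)
  also have "\<dots> = (\<Sum>m\<in>K. \<Sum>b\<in>K. \<Sum>a\<in>K. if a < b \<and> m \<noteq> a \<and> m \<noteq> b then H m a b else 0)"
    by (rule perm3_cyc)
  also have "\<dots> = (\<Sum>m\<in>K. psum (K - {m}) (\<lambda>a b. H m a b))"
    using K by (intro sum.cong refl) (auto simp: psum_ind sum_diff1_ind sum_if_const if_if_eq_conj intro!: sum.cong)
  finally show ?thesis .
qed

lemma R4:
  fixes H :: "nat \<Rightarrow> nat \<Rightarrow> nat \<Rightarrow> 'm::ab_group_add"
  assumes K: "finite K"
    and sym: "\<And>a b c. H a b c = H b a c"
    and cyc: "\<And>a b c. a < b \<Longrightarrow> b < c \<Longrightarrow> H a b c + H b c a + H c a b = 0"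
  shows "psum K (\<lambda>a b. \<Sum>c\<in>K - {a,b}. H a b c) = 0"
proof -
  have split: "(if a < b \<and> c \<noteq> a \<and> c \<noteq> b then x else 0) =
     (if c < a \<and> a < b then x else 0) + (if a < c \<and> c < b then x else 0) + (if a < b \<and> b < c then x else 0)"
    for a b c :: nat and x :: 'm
    by (cases "a < b"; cases "c < a"; cases "a < c"; cases "c < b"; cases "b < c") auto
  have "psum K (\<lambda>a b. \<Sum>c\<in>K - {a,b}. H a b c) =
    (\<Sum>b\<in>K. \<Sum>a\<in>K. \<Sum>c\<in>K. if a < b \<and> c \<noteq> a \<and> c \<noteq> b then H a b c else 0)"
    using K by (simp add: psum_ind sum_diff2_ind sum_if_const if_if_eq_conj)
  also have "\<dots> = (\<Sum>b\<in>K. \<Sum>a\<in>K. \<Sum>c\<in>K. if c < a \<and> a < b then H a b c else 0) +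
      (\<Sum>b\<in>K. \<Sum>a\<in>K. \<Sum>c\<in>K. if a < c \<and> c < b then H a b c else 0) +
      (\<Sum>b\<in>K. \<Sum>a\<in>K. \<Sum>c\<in>K. if a < b \<and> b < c then H a b c else 0)"
    by (simp only: split sum.distrib)
  also have "(\<Sum>b\<in>K. \<Sum>a\<in>K. \<Sum>c\<in>K. if a < c \<and> c < b then H a b c else 0) =
      (\<Sum>r\<in>K. \<Sum>q\<in>K. \<Sum>p\<in>K. if p < q \<and> q < r then H p r q else 0)"
    by (rule perm3_in)
  also have "(\<Sum>b\<in>K. \<Sum>a\<in>K. \<Sum>c\<in>K. if a < b \<and> b < c then H a b c else 0) =
      (\<Sum>r\<in>K. \<Sum>q\<in>K. \<Sum>p\<in>K. if p < q \<and> q < r then H p q r else 0)"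
    by (rule perm3_cyc)
  also have "(\<Sum>b\<in>K. \<Sum>a\<in>K. \<Sum>c\<in>K. if c < a \<and> a < b then H a b c else 0) +
      (\<Sum>r\<in>K. \<Sum>q\<in>K. \<Sum>p\<in>K. if p < q \<and> q < r then H p r q else 0) +
      (\<Sum>r\<in>K. \<Sum>q\<in>K. \<Sum>p\<in>K. if p < q \<and> q < r then H p q r else 0) =
      (\<Sum>r\<in>K. \<Sum>q\<in>K. \<Sum>p\<in>K. if p < q \<and> q < r then H q r p + H p r q + H p q r else 0)"
    by (simp only: if_add0 sum.distrib)
  also have "\<dots> = 0"
  proof (intro sum.neutral ballI)
    fix r q p
    show "(if p < q \<and> q < r then H q r p + H p r q + H p q r else 0) = 0"
      using cyc[of p q r] sym[of p r q] by (auto simp: algebra_simps)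
  qed
  finally show ?thesis .
qed

lemma R5:
  fixes H :: "nat \<Rightarrow> nat \<Rightarrow> nat \<Rightarrow> nat \<Rightarrow> 'm::ab_group_add"
  assumes K: "finite K"
    and sym: "\<And>a b c d. H a b c d = H c d a b"
    and two: "\<And>x::'m. x + x = 0"
  shows "psum K (\<lambda>a b. psum (K - {a,b}) (\<lambda>c d. H a b c d)) = 0"
proof -
  define C where "C a b c d \<longleftrightarrow> a < b \<and> c < d \<and> c \<noteq> a \<and> c \<noteq> b \<and> d \<noteq> a \<and> d \<noteq> b" for a b c d :: nat
  have Cs: "C a b c d = C c d a b" for a b c d unfolding C_def by auto
  have split: "(if C a b c d then x else 0) = (if C a b c d \<and> a < c then x else 0) + (if C a b c d \<and> c < a then x else 0)"
    for a b c d and x :: 'm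
    unfolding C_def by (cases "a < c"; cases "c < a") auto
  have "psum K (\<lambda>a b. psum (K - {a,b}) (\<lambda>c d. H a b c d)) =
    (\<Sum>b\<in>K. \<Sum>a\<in>K. \<Sum>d\<in>K. \<Sum>c\<in>K. if C a b c d then H a b c d else 0)"
    using K unfolding C_def
    by (simp add: psum_ind sum_diff2_ind sum_if_const if_if_eq_conj conj_ac)
  also have "\<dots> = (\<Sum>b\<in>K. \<Sum>a\<in>K. \<Sum>d\<in>K. \<Sum>c\<in>K. if C a b c d \<and> a < c then H a b c d else 0) +
     (\<Sum>b\<in>K. \<Sum>a\<in>K. \<Sum>d\<in>K. \<Sum>c\<in>K. if C a b c d \<and> c < a then H a b c d else 0)"
    by (simp only: split sum.distrib)
  also have "(\<Sum>b\<in>K. \<Sum>a\<in>K. \<Sum>d\<in>K. \<Sum>c\<in>K. if C a b c d \<and> c < a then H a b c d else 0) =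
     (\<Sum>d\<in>K. \<Sum>c\<in>K. \<Sum>b\<in>K. \<Sum>a\<in>K. if C a b c d \<and> c < a then H a b c d else 0)"
    by (rule perm4)
  also have "\<dots> = (\<Sum>b\<in>K. \<Sum>a\<in>K. \<Sum>d\<in>K. \<Sum>c\<in>K. if C a b c d \<and> a < c then H a b c d else 0)"
    by (intro sum.cong refl) (simp add: Cs sym)
  finally show ?thesis by (simp add: two)
qed



locale LR =
  fixes \<iota> :: "'k::field \<Rightarrow> 'a::comm_ring_1"
    and smL :: "'a \<Rightarrow> 'l::ab_group_add \<Rightarrow> 'l"
    and br :: "'l \<Rightarrow> 'l \<Rightarrow> 'l" and sq :: "'l \<Rightarrow> 'l"
    and \<theta> :: "'l \<Rightarrow> 'a \<Rightarrow> 'a"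
    and smM :: "'a \<Rightarrow> 'm::ab_group_add \<Rightarrow> 'm"
    and \<rho> :: "'l \<Rightarrow> 'm \<Rightarrow> 'm"
  assumes char: "CHAR('k) = 2"
    and alg: "restricted_LR_algebra \<iota> smL br sq \<theta>"
    and md: "restricted_LR_module \<iota> smL br sq \<theta> smM \<rho>"
begin

lemma rh: "ring_hom_K \<iota>" using alg by (simp add: restricted_LR_algebra_def)
lemma iota_add: "\<iota> (c + d) = \<iota> c + \<iota> d" using rh by (simp add: ring_hom_K_def)
lemma iota_mult: "\<iota> (c * d) = \<iota> c * \<iota> d" using rh by (simp add: ring_hom_K_def)
lemma iota_one: "\<iota> 1 = 1" using rh by (simp add: ring_hom_K_def)
lemma iota_zero: "\<iota> 0 = 0"
  using iota_add[of 0 0] by simp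
lemma iota_pow: "\<iota> (c ^ n) = \<iota> c ^ n"
  by (induction n) (simp_all add: iota_one iota_mult)

lemma two_k: "(1::'k) + 1 = 0"
proof -
  have "(of_nat CHAR('k) :: 'k) = 0" by (rule of_nat_CHAR)
  then show ?thesis using char by simp
qed

lemma A2[simp]: "(a::'a) + a = 0"
proof -
  have "\<iota> 1 + \<iota> 1 = 0" using iota_add[of 1 1] two_k iota_zero by metis
  then have "(1::'a) + 1 = 0" by (simp add: iota_one)
  then have "(1 + 1) * a = 0" by simp
  then show ?thesis by (simp add: distrib_right)
qed

lemma smL_mod: "is_module smL" using alg by (simp add: restricted_LR_algebra_def)
lemma smL_add_r[simp]: "smL a (x + y) = smL a x + smL a y" using smL_mod by (simp add: is_module_def)
lemma smL_add_l: "smL (a + b) x = smL a x + smL b x" using smL_mod by (simp add: is_module_def)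
lemma smL_mult: "smL (a * b) x = smL a (smL b x)" using smL_mod by (simp add: is_module_def)
lemma smL_one[simp]: "smL 1 x = x" using smL_mod by (simp add: is_module_def)
lemma smL_zero_l[simp]: "smL 0 x = 0" using smL_add_l[of 0 0 x] by simp
lemma L2[simp]: "(x::'l) + x = 0"
  using smL_add_l[of 1 1 x] by simp
lemma L_neg[simp]: "- (x::'l) = x"
  using L2[of x] by (metis add_eq_0_iff)
lemma L_diff[simp]: "(x::'l) - y = x + y"
  by (metis L_neg diff_conv_add_uminus)

lemma smM_mod: "is_module smM" using md by (simp add: restricted_LR_module_def)
lemma smM_add_r[simp]: "smM a (x + y) = smM a x + smM a y" using smM_mod by (simp add: is_module_def)
lemma smM_add_l: "smM (a + b) x = smM a x + smM b x" using smM_mod by (simp add: is_module_def)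
lemma smM_mult: "smM (a * b) x = smM a (smM b x)" using smM_mod by (simp add: is_module_def)
lemma smM_one[simp]: "smM 1 x = x" using smM_mod by (simp add: is_module_def)
lemma smM_zero_l[simp]: "smM 0 x = 0" using smM_add_l[of 0 0 x] by simp
lemma smM_zero_r[simp]: "smM a 0 = 0" using smM_add_r[of a 0 0] by simp
lemma M2[simp]: "(x::'m) + x = 0"
  using smM_add_l[of 1 1 x] by simp
lemma M2'[simp]: "(x::'m) + (x + y) = y"
  by (metis M2 add.assoc add.left_neutral)
lemma M_neg[simp]: "- (x::'m) = x"
  using M2[of x] by (metis add_eq_0_iff)
lemma M_diff[simp]: "(x::'m) - y = x + y"
  by (metis M_neg diff_conv_add_uminus)

lemma Lie: "restricted_Lie_algebra \<iota> smL br sq" using alg by (simp add: restricted_LR_algebra_def)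
lemma br_add_l[simp]: "br (x + y) z = br x z + br y z" using Lie by (simp add: restricted_Lie_algebra_def)
lemma br_add_r[simp]: "br x (y + z) = br x y + br x z" using Lie by (simp add: restricted_Lie_algebra_def)
lemma br_self[simp]: "br x x = 0" using Lie by (simp add: restricted_Lie_algebra_def)
lemma jacobi: "br x (br y z) + br y (br z x) + br z (br x y) = 0" using Lie by (simp add: restricted_Lie_algebra_def)
lemma br_sq: "br (sq x) y = br x (br x y)" using Lie by (simp add: restricted_Lie_algebra_def)
lemma sq_add: "sq (x + y) = sq x + sq y + br x y" using Lie by (simp add: restricted_Lie_algebra_def)
lemma br_zero_l[simp]: "br 0 y = 0" using br_add_l[of 0 0 y] by simp
lemma br_zero_r[simp]: "br y 0 = 0" using br_add_r[of y 0 0] by simp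
lemma br_comm: "br y x = br x y"
proof -
  have "br (x + y) (x + y) = br x y + br y x" by (simp only: br_add_l br_add_r) simp
  then have "br x y + br y x = 0" by (metis br_self)
  then show ?thesis by (metis L2 add_left_cancel)
qed

lemma der: "is_derivation \<iota> (\<theta> x)" using alg by (simp add: restricted_LR_algebra_def)
lemma th_add_r[simp]: "\<theta> x (a + b) = \<theta> x a + \<theta> x b" using der by (simp add: is_derivation_def)
lemma th_mult: "\<theta> x (a * b) = a * \<theta> x b + \<theta> x a * b" using der by (simp add: is_derivation_def)
lemma th_add_l: "\<theta> (x + y) b = \<theta> x b + \<theta> y b" using alg by (simp add: restricted_LR_algebra_def)
lemma th_sm: "\<theta> (smL a x) b = a * \<theta> x b" using alg by (simp add: restricted_LR_algebra_def)
lemma th_sqr[simp]: "\<theta> x (a ^ 2) = 0"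
  by (simp add: power2_eq_square th_mult mult.commute)
lemma br_smL: "br x (smL a y) = smL a (br x y) + smL (\<theta> x a) y" using alg by (simp add: restricted_LR_algebra_def)
lemma sq_sm: "sq (smL a x) = smL (a ^ 2) (sq x) + smL (\<theta> (smL a x) a) x" using alg by (simp add: restricted_LR_algebra_def)

lemma rho_add_r[simp]: "\<rho> x (m + n) = \<rho> x m + \<rho> x n" using md by (simp add: restricted_LR_module_def)
lemma rho_add_l[simp]: "\<rho> (x + y) m = \<rho> x m + \<rho> y m" using md by (simp add: restricted_LR_module_def)
lemma rho_sm: "\<rho> (smL a x) m = smM a (\<rho> x m)" using md by (simp add: restricted_LR_module_def)
lemma rho_br: "\<rho> (br x y) m = \<rho> x (\<rho> y m) + \<rho> y (\<rho> x m)" using md by (simp add: restricted_LR_module_def)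
lemma rho_sq: "\<rho> (sq x) m = \<rho> x (\<rho> x m)" using md by (simp add: restricted_LR_module_def)
lemma rho_smM: "\<rho> x (smM a m) = smM a (\<rho> x m) + smM (\<theta> x a) m" using md by (simp add: restricted_LR_module_def)
lemma rho_zero_r[simp]: "\<rho> x 0 = 0" using rho_add_r[of x 0 0] by simp
lemma rho_zero_l[simp]: "\<rho> 0 m = 0" using rho_add_l[of 0 0 m] by simp

end


lemma GG_map': "distinct l \<Longrightarrow> image_mset g (mset l) = GG g (set l)"
  using GG_map by (metis mset_map)

lemma mset_del_map: "distinct l \<Longrightarrow> i < length l \<Longrightarrow> mset (del i (map g l)) = GG g (set l - {l!i})"
  by (simp add: del_map GG_map' del_distinct del_set)

lemma mset_deldel_map: "distinct l \<Longrightarrow> i < j \<Longrightarrow> j < length l \<Longrightarrow>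
   mset (del i (del j (map g l))) = GG g (set l - {l!i, l!j})"
proof -
  assume d: "distinct l" and ij: "i < j" "j < length l"
  have "mset (del i (del j (map g l))) = GG g (set (del i (del j l)))"
    using d by (simp add: del_map GG_map' del_distinct)
  also have "set (del i (del j l)) = set (del j l) - {del j l ! i}"
    using d ij by (simp add: del_distinct del_set)
  also have "\<dots> = set l - {l!i, l!j}"
    using d ij by (auto simp: del_set del_nth_lt)
  finally show ?thesis .
qed

context LR
begin

definition RD :: "('l multiset \<Rightarrow> 'm) \<Rightarrow> (nat \<Rightarrow> 'l) \<Rightarrow> nat set \<Rightarrow> 'm" where
  "RD \<Phi> g K = psum K (\<lambda>a b. \<Phi> (add_mset (br (g a) (g b)) (GG g (K - {a,b})))) +
     (\<Sum>a\<in>K. \<rho> (g a) (\<Phi> (GG g (K - {a}))))"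

definition DM :: "('l multiset \<Rightarrow> 'm) \<Rightarrow> 'l multiset \<Rightarrow> 'm" where
  "DM \<Phi> = Mof (dCE \<rho> br (\<lambda>xs. \<Phi> (mset xs)))"

definition RDelta :: "('l multiset \<Rightarrow> 'm) \<Rightarrow> ('l \<Rightarrow> 'l multiset \<Rightarrow> 'm) \<Rightarrow> 'l \<Rightarrow> (nat \<Rightarrow> 'l) \<Rightarrow> nat set \<Rightarrow> 'm" where
  "RDelta \<Phi> \<Omega> x g K = \<rho> x (\<Phi> (add_mset x (GG g K))) + (\<Sum>a\<in>K. \<rho> (g a) (\<Omega> x (GG g (K - {a})))) +
     \<Phi> (add_mset (sq x) (GG g K)) + (\<Sum>a\<in>K. \<Phi> (add_mset (br x (g a)) (add_mset x (GG g (K - {a}))))) +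
     psum K (\<lambda>a b. \<Omega> x (add_mset (br (g a) (g b)) (GG g (K - {a,b}))))"

definition DeltaM :: "('l multiset \<Rightarrow> 'm) \<Rightarrow> ('l \<Rightarrow> 'l multiset \<Rightarrow> 'm) \<Rightarrow> 'l \<Rightarrow> 'l multiset \<Rightarrow> 'm" where
  "DeltaM \<Phi> \<Omega> x = Mof (deltaLR \<rho> br sq (\<lambda>xs. \<Phi> (mset xs)) (\<lambda>y zs. \<Omega> y (mset zs)) x)"

lemma dCE_map:
  assumes "distinct l"
  shows "dCE \<rho> br (\<lambda>xs. \<Phi> (mset xs)) (map g l) = RD \<Phi> g (set l)"
proof -
  define F where "F a b = \<Phi> (add_mset (br (g a) (g b)) (GG g (set l - {a,b})))" for a b
  define f2 where "f2 a = \<rho> (g a) (\<Phi> (GG g (set l - {a})))" for a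
  have Fs: "F a b = F b a" for a b unfolding F_def by (simp add: br_comm insert_commute)
  have 1: "(\<Sum>j<length (map g l). \<Sum>i<j. \<Phi> (mset (br (map g l ! i) (map g l ! j) # del i (del j (map g l))))) =
     (\<Sum>j<length l. \<Sum>i<j. F (l!i) (l!j))"
  proof (simp only: length_map, intro sum.cong refl)
    fix i j assume ij: "j \<in> {..<length l}" "i \<in> {..<j}"
    then have "mset (del i (del j (map g l))) = GG g (set l - {l!i, l!j})"
      using assms by (intro mset_deldel_map) auto
    then show "\<Phi> (mset (br (map g l ! i) (map g l ! j) # del i (del j (map g l)))) = F (l!i) (l!j)"
      using ij by (simp add: F_def del: mset_map)
  qed
  have 2: "(\<Sum>i<length (map g l). \<rho> (map g l ! i) (\<Phi> (mset (del i (map g l))))) =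
     (\<Sum>i<length l. f2 (l!i))"
  proof (simp only: length_map, intro sum.cong refl)
    fix i assume i: "i \<in> {..<length l}"
    then have "mset (del i (map g l)) = GG g (set l - {l!i})"
      using assms by (intro mset_del_map) auto
    then show "\<rho> (map g l ! i) (\<Phi> (mset (del i (map g l)))) = f2 (l!i)" using i by (simp add: f2_def del: mset_map)
  qed
  have "dCE \<rho> br (\<lambda>xs. \<Phi> (mset xs)) (map g l) = psum (set l) F + (\<Sum>a\<in>set l. f2 a)"
    unfolding dCE_def 1 2 pair_sum[where F=F, OF assms Fs] sum_distinct_nth[OF assms, of f2] ..
  then show ?thesis unfolding RD_def F_def f2_def .
qed

lemma DM_list: "dCE \<rho> br (\<lambda>xs. \<Phi> (mset xs)) xs = DM \<Phi> (mset xs)"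
  unfolding DM_def by (rule Mof_list[of _ "RD \<Phi>"], rule dCE_map)

lemma DM_GG: "finite K \<Longrightarrow> DM \<Phi> (GG g K) = RD \<Phi> g K"
  unfolding DM_def by (rule Mof_GG[of _ "RD \<Phi>"], rule dCE_map)

lemma delta_map:
  assumes "distinct l"
  shows "deltaLR \<rho> br sq (\<lambda>xs. \<Phi> (mset xs)) (\<lambda>y zs. \<Omega> y (mset zs)) x (map g l) = RDelta \<Phi> \<Omega> x g (set l)"
proof -
  define F where "F a b = \<Omega> x (add_mset (br (g a) (g b)) (GG g (set l - {a,b})))" for a b
  define f2 where "f2 a = \<rho> (g a) (\<Omega> x (GG g (set l - {a})))" for a
  define f3 where "f3 a = \<Phi> (add_mset (br x (g a)) (add_mset x (GG g (set l - {a}))))" for a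
  have Fs: "F a b = F b a" for a b unfolding F_def by (simp add: br_comm insert_commute)
  have 1: "(\<Sum>j<length (map g l). \<Sum>i<j. \<Omega> x (mset (br (map g l ! i) (map g l ! j) # del i (del j (map g l))))) =
     (\<Sum>j<length l. \<Sum>i<j. F (l!i) (l!j))"
  proof (simp only: length_map, intro sum.cong refl)
    fix i j assume ij: "j \<in> {..<length l}" "i \<in> {..<j}"
    then have "mset (del i (del j (map g l))) = GG g (set l - {l!i, l!j})"
      using assms by (intro mset_deldel_map) auto
    then show "\<Omega> x (mset (br (map g l ! i) (map g l ! j) # del i (del j (map g l)))) = F (l!i) (l!j)"
      using ij by (simp add: F_def del: mset_map)
  qed
  have 2: "(\<Sum>i<length (map g l). \<rho> (map g l ! i) (\<Omega> x (mset (del i (map g l))))) =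
     (\<Sum>i<length l. f2 (l!i))"
  proof (simp only: length_map, intro sum.cong refl)
    fix i assume i: "i \<in> {..<length l}"
    then have "mset (del i (map g l)) = GG g (set l - {l!i})"
      using assms by (intro mset_del_map) auto
    then show "\<rho> (map g l ! i) (\<Omega> x (mset (del i (map g l)))) = f2 (l!i)" using i by (simp add: f2_def del: mset_map)
  qed
  have 3: "(\<Sum>i<length (map g l). \<Phi> (mset (br x (map g l ! i) # x # del i (map g l)))) =
     (\<Sum>i<length l. f3 (l!i))"
  proof (simp only: length_map, intro sum.cong refl)
    fix i assume i: "i \<in> {..<length l}"
    then have "mset (del i (map g l)) = GG g (set l - {l!i})"
      using assms by (intro mset_del_map) auto
    then show "\<Phi> (mset (br x (map g l ! i) # x # del i (map g l))) = f3 (l!i)" using i by (simp add: f3_def del: mset_map)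
  qed
  have 4: "mset (x # map g l) = add_mset x (GG g (set l))" "mset (sq x # map g l) = add_mset (sq x) (GG g (set l))"
    using assms by (simp_all add: GG_map del: mset_map)
  have "deltaLR \<rho> br sq (\<lambda>xs. \<Phi> (mset xs)) (\<lambda>y zs. \<Omega> y (mset zs)) x (map g l) =
     \<rho> x (\<Phi> (add_mset x (GG g (set l)))) + (\<Sum>a\<in>set l. f2 a) + \<Phi> (add_mset (sq x) (GG g (set l))) +
     (\<Sum>a\<in>set l. f3 a) + psum (set l) F"
    unfolding deltaLR_def 1 2 3 4 pair_sum[where F=F, OF assms Fs] sum_distinct_nth[OF assms, of f2]
       sum_distinct_nth[OF assms, of f3] ..
  then show ?thesis unfolding RDelta_def F_def f2_def f3_def .
qed

lemma DeltaM_list: "deltaLR \<rho> br sq (\<lambda>xs. \<Phi> (mset xs)) (\<lambda>y zs. \<Omega> y (mset zs)) x xs = DeltaM \<Phi> \<Omega> x (mset xs)"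
  unfolding DeltaM_def by (rule Mof_list[of _ "RDelta \<Phi> \<Omega> x"], rule delta_map)

lemma DeltaM_GG: "finite K \<Longrightarrow> DeltaM \<Phi> \<Omega> x (GG g K) = RDelta \<Phi> \<Omega> x g K"
  unfolding DeltaM_def by (rule Mof_GG[of _ "RDelta \<Phi> \<Omega> x"], rule delta_map)

end



lemma psum_insert':
  assumes "finite K" "k \<notin> K"
  shows "psum (insert k K) F = (\<Sum>a\<in>K. if a < k then F a k else F k a) + psum K F"
proof -
  have "psum (insert k K) F = psum (insert k K) (\<lambda>a b. if a < b then F a b else F b a)"
    unfolding psum_def by (intro sum.cong refl) auto
  also have "\<dots> = (\<Sum>a\<in>K. if a < k then F a k else F k a) + psum K (\<lambda>a b. if a < b then F a b else F b a)"
    using assms by (subst psum_insert) (auto intro!: sum.cong simp: not_less_iff_gr_or_eq)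
  also have "psum K (\<lambda>a b. if a < b then F a b else F b a) = psum K F"
    unfolding psum_def by (intro sum.cong refl) auto
  finally show ?thesis .
qed

lemma psum_cong: "(\<And>a b. a \<in> K \<Longrightarrow> b \<in> K \<Longrightarrow> F a b = G a b) \<Longrightarrow> psum K F = psum K G"
  unfolding psum_def by (intro sum.cong refl) auto

lemma psum_cong2: "K = K' \<Longrightarrow> (\<And>a b. a \<in> K' =simp=> b \<in> K' =simp=> F a b = G a b) \<Longrightarrow> psum K F = psum K' G"
  unfolding simp_implies_def by (auto intro: psum_cong)

lemma fresh_ex: "finite (K::nat set) \<Longrightarrow> \<exists>k. k \<notin> K"
  using ex_new_if_finite infinite_UNIV_nat by blast

lemma neq_fresh: "a \<in> K \<Longrightarrow> k \<notin> K \<Longrightarrow> (a = k) = False" "a \<in> K \<Longrightarrow> k \<notin> K \<Longrightarrow> (k = a) = False"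
  by auto

lemma diff_fresh: "k \<notin> K \<Longrightarrow> K - {k} = K" "k \<notin> K \<Longrightarrow> K - {a, k} = K - {a}" "k \<notin> K \<Longrightarrow> K - {k, a} = K - {a}"
  by auto

context LR
begin

definition RD1 :: "('l multiset \<Rightarrow> 'm) \<Rightarrow> 'l \<Rightarrow> (nat \<Rightarrow> 'l) \<Rightarrow> nat set \<Rightarrow> 'm" where
  "RD1 \<Phi> y g K = (\<Sum>a\<in>K. \<Phi> (add_mset (br y (g a)) (GG g (K - {a})))) +
     psum K (\<lambda>a b. \<Phi> (add_mset (br (g a) (g b)) (add_mset y (GG g (K - {a,b}))))) +
     \<rho> y (\<Phi> (GG g K)) + (\<Sum>a\<in>K. \<rho> (g a) (\<Phi> (add_mset y (GG g (K - {a})))))"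

lemma RD_insert:
  assumes "finite K" "k \<notin> K"
  shows "RD \<Phi> g (insert k K) = RD1 \<Phi> (g k) g K"
  using assms unfolding RD_def RD1_def
  by (simp add: GG_insert psum_insert' GG_diff_insert neq_fresh diff_fresh br_comm insert_commute sum.distrib add_ac
      cong: psum_cong2 if_cong)


lemma F1:
  assumes K: "finite K"
  shows "DM \<Phi> (add_mset y (GG g K)) = RD1 \<Phi> y g K"
proof -
  obtain k where k: "k \<notin> K" using fresh_ex[OF K] by blast
  have e: "add_mset y (GG g K) = GG (g(k:=y)) (insert k K)"
    using K k by (simp add: GG_insert GG_upd)
  have "DM \<Phi> (add_mset y (GG g K)) = RD1 \<Phi> y (g(k:=y)) K"
    using K k by (simp add: e DM_GG RD_insert)
  also have "\<dots> = RD1 \<Phi> y g K" unfolding RD1_def using k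
    by (simp add: GG_upd neq_fresh cong: sum.cong psum_cong2)
  finally show ?thesis .
qed

definition RD2 :: "('l multiset \<Rightarrow> 'm) \<Rightarrow> 'l \<Rightarrow> 'l \<Rightarrow> (nat \<Rightarrow> 'l) \<Rightarrow> nat set \<Rightarrow> 'm" where
  "RD2 \<Phi> x y g K = \<Phi> (add_mset (br x y) (GG g K)) +
     (\<Sum>a\<in>K. \<Phi> (add_mset (br x (g a)) (add_mset y (GG g (K - {a}))))) +
     (\<Sum>a\<in>K. \<Phi> (add_mset (br y (g a)) (add_mset x (GG g (K - {a}))))) +
     psum K (\<lambda>a b. \<Phi> (add_mset (br (g a) (g b)) (add_mset x (add_mset y (GG g (K - {a,b})))))) +
     \<rho> x (\<Phi> (add_mset y (GG g K))) + \<rho> y (\<Phi> (add_mset x (GG g K))) +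
     (\<Sum>a\<in>K. \<rho> (g a) (\<Phi> (add_mset x (add_mset y (GG g (K - {a}))))))"

lemma RD1_insert:
  assumes "finite K" "k \<notin> K"
  shows "RD1 \<Phi> x g (insert k K) = RD2 \<Phi> x (g k) g K"
  using assms unfolding RD1_def RD2_def
  by (simp add: GG_insert psum_insert' GG_diff_insert neq_fresh diff_fresh br_comm insert_commute add_mset_commute
      sum.distrib add_ac cong: psum_cong2 if_cong)

lemma F2:
  assumes K: "finite K"
  shows "DM \<Phi> (add_mset x (add_mset y (GG g K))) = RD2 \<Phi> x y g K"
proof -
  obtain k where k: "k \<notin> K" using fresh_ex[OF K] by blast
  have e: "add_mset y (GG g K) = GG (g(k:=y)) (insert k K)"
    using K k by (simp add: GG_insert GG_upd)
  have "DM \<Phi> (add_mset x (add_mset y (GG g K))) = RD2 \<Phi> x y (g(k:=y)) K"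
    using K k by (simp add: e F1 RD1_insert)
  also have "\<dots> = RD2 \<Phi> x y g K" unfolding RD2_def using k
    by (simp add: GG_upd neq_fresh cong: sum.cong psum_cong2)
  finally show ?thesis .
qed

definition RDelta1 :: "('l multiset \<Rightarrow> 'm) \<Rightarrow> ('l \<Rightarrow> 'l multiset \<Rightarrow> 'm) \<Rightarrow> 'l \<Rightarrow> 'l \<Rightarrow> (nat \<Rightarrow> 'l) \<Rightarrow> nat set \<Rightarrow> 'm" where
  "RDelta1 \<Phi> \<Omega> x y g K = \<rho> x (\<Phi> (add_mset x (add_mset y (GG g K)))) +
     \<rho> y (\<Omega> x (GG g K)) + (\<Sum>a\<in>K. \<rho> (g a) (\<Omega> x (add_mset y (GG g (K - {a}))))) +
     \<Phi> (add_mset (sq x) (add_mset y (GG g K))) +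
     \<Phi> (add_mset (br x y) (add_mset x (GG g K))) +
     (\<Sum>a\<in>K. \<Phi> (add_mset (br x (g a)) (add_mset x (add_mset y (GG g (K - {a})))))) +
     (\<Sum>a\<in>K. \<Omega> x (add_mset (br y (g a)) (GG g (K - {a})))) +
     psum K (\<lambda>a b. \<Omega> x (add_mset (br (g a) (g b)) (add_mset y (GG g (K - {a,b})))))"

lemma RDelta_insert:
  assumes "finite K" "k \<notin> K"
  shows "RDelta \<Phi> \<Omega> x g (insert k K) = RDelta1 \<Phi> \<Omega> x (g k) g K"
  using assms unfolding RDelta_def RDelta1_def
  by (simp add: GG_insert psum_insert' GG_diff_insert neq_fresh diff_fresh br_comm insert_commute add_mset_commute
      sum.distrib add_ac cong: psum_cong2 if_cong)

lemma D1:
  assumes K: "finite K"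
  shows "DeltaM \<Phi> \<Omega> x (add_mset y (GG g K)) = RDelta1 \<Phi> \<Omega> x y g K"
proof -
  obtain k where k: "k \<notin> K" using fresh_ex[OF K] by blast
  have e: "add_mset y (GG g K) = GG (g(k:=y)) (insert k K)"
    using K k by (simp add: GG_insert GG_upd)
  have "DeltaM \<Phi> \<Omega> x (add_mset y (GG g K)) = RDelta1 \<Phi> \<Omega> x y (g(k:=y)) K"
    using K k by (simp add: e DeltaM_GG RDelta_insert)
  also have "\<dots> = RDelta1 \<Phi> \<Omega> x y g K" unfolding RDelta1_def using k
    by (simp add: GG_upd neq_fresh cong: sum.cong psum_cong2)
  finally show ?thesis .
qed


definition good_phi :: "('l multiset \<Rightarrow> 'm) \<Rightarrow> bool" where
  "good_phi \<Phi> \<longleftrightarrow> (\<forall>u v X. \<Phi> (add_mset (u + v) X) = \<Phi> (add_mset u X) + \<Phi> (add_mset v X)) \<and>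
     (\<forall>a u X. \<Phi> (add_mset (smL a u) X) = smM a (\<Phi> (add_mset u X))) \<and>
     (\<forall>u X. \<Phi> (add_mset u (add_mset u X)) = 0)"

definition good_omega :: "('l multiset \<Rightarrow> 'm) \<Rightarrow> ('l \<Rightarrow> 'l multiset \<Rightarrow> 'm) \<Rightarrow> bool" where
  "good_omega \<Phi> \<Omega> \<longleftrightarrow> (\<forall>x. good_phi (\<Omega> x)) \<and>
     (\<forall>a x X. \<Omega> (smL a x) X = smM (a^2) (\<Omega> x X)) \<and>
     (\<forall>x y X. \<Omega> (x + y) X = \<Omega> x X + \<Omega> y X + \<Phi> (add_mset x (add_mset y X)))"

lemma gp_lin: "good_phi \<Phi> \<Longrightarrow> \<Phi> (add_mset (u + v) X) = \<Phi> (add_mset u X) + \<Phi> (add_mset v X)"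
  by (simp add: good_phi_def)
lemma gp_lin2: "good_phi \<Phi> \<Longrightarrow> \<Phi> (add_mset c (add_mset (u + v) X)) = \<Phi> (add_mset c (add_mset u X)) + \<Phi> (add_mset c (add_mset v X))"
  using gp_lin[of \<Phi> u v "add_mset c X"] by (simp add: add_mset_commute)
lemma gp_lin3: "good_phi \<Phi> \<Longrightarrow> \<Phi> (add_mset c (add_mset d (add_mset (u + v) X))) = \<Phi> (add_mset c (add_mset d (add_mset u X))) + \<Phi> (add_mset c (add_mset d (add_mset v X)))"
  using gp_lin[of \<Phi> u v "add_mset c (add_mset d X)"] by (simp add: add_mset_commute)
lemma gp_hom: "good_phi \<Phi> \<Longrightarrow> \<Phi> (add_mset (smL a u) X) = smM a (\<Phi> (add_mset u X))"
  by (simp add: good_phi_def)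
lemma gp_hom2: "good_phi \<Phi> \<Longrightarrow> \<Phi> (add_mset c (add_mset (smL a u) X)) = smM a (\<Phi> (add_mset c (add_mset u X)))"
  using gp_hom[of \<Phi> a u "add_mset c X"] by (simp add: add_mset_commute)
lemma gp_hom3: "good_phi \<Phi> \<Longrightarrow> \<Phi> (add_mset c (add_mset d (add_mset (smL a u) X))) = smM a (\<Phi> (add_mset c (add_mset d (add_mset u X))))"
  using gp_hom[of \<Phi> a u "add_mset c (add_mset d X)"] by (simp add: add_mset_commute)
lemma gp_alt: "good_phi \<Phi> \<Longrightarrow> \<Phi> (add_mset u (add_mset u X)) = 0"
  by (simp add: good_phi_def)
lemma gp_alt2: "good_phi \<Phi> \<Longrightarrow> \<Phi> (add_mset c (add_mset u (add_mset u X))) = 0"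
  using gp_alt[of \<Phi> u "add_mset c X"] by (simp add: add_mset_commute)
lemma gp_alt2': "good_phi \<Phi> \<Longrightarrow> \<Phi> (add_mset u (add_mset c (add_mset u X))) = 0"
  using gp_alt[of \<Phi> u "add_mset c X"] by (simp add: add_mset_commute)
lemma gp_zero: "good_phi \<Phi> \<Longrightarrow> \<Phi> (add_mset 0 X) = 0"
  using gp_lin[of \<Phi> 0 0 X] by simp
lemma gp_zero2: "good_phi \<Phi> \<Longrightarrow> \<Phi> (add_mset c (add_mset 0 X)) = 0"
  using gp_lin2[of \<Phi> c 0 0 X] by simp

lemma smM_sum: "smM c (\<Sum>a\<in>K. f a) = (\<Sum>a\<in>K. smM c (f a))"
  by (induction K rule: infinite_finite_induct) auto

lemma smM_psum: "smM c (psum K F) = psum K (\<lambda>a b. smM c (F a b))"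
  unfolding psum_def by (simp add: smM_sum)

lemma psum_zero[simp]: "psum K (\<lambda>a b. 0) = 0"
  unfolding psum_def by simp

lemma psum_add: "psum K (\<lambda>a b. F a b + G a b) = psum K F + psum K G"
  unfolding psum_def by (simp add: sum.distrib)

lemma br_smL_l: "br (smL a y) x = smL a (br y x) + smL (\<theta> x a) y"
  using br_smL[of x a y] br_comm by metis

lemma GG_ex: "\<exists>g K. finite K \<and> X = GG g K"
  by (rule mset_GG_ex)

lemma DM_lin:
  assumes gp: "good_phi \<Phi>"
  shows "DM \<Phi> (add_mset (u + v) X) = DM \<Phi> (add_mset u X) + DM \<Phi> (add_mset v X)"
proof -
  obtain g K where K: "finite K" "X = GG g K" using GG_ex by blast
  show ?thesis unfolding K(2) F1[OF K(1)] RD1_def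
    by (simp add: gp gp_lin gp_lin2 sum.distrib psum_add add_ac)
qed

lemma DM_hom:
  assumes gp: "good_phi \<Phi>"
  shows "DM \<Phi> (add_mset (smL c u) X) = smM c (DM \<Phi> (add_mset u X))"
proof -
  obtain g K where K: "finite K" "X = GG g K" using GG_ex by blast
  show ?thesis unfolding K(2) F1[OF K(1)] RD1_def
    by (simp add: gp gp_lin gp_lin2 gp_hom gp_hom2 br_smL_l rho_sm rho_smM smM_sum smM_psum
        sum.distrib psum_add add_ac)
qed

lemma DM_alt:
  assumes gp: "good_phi \<Phi>"
  shows "DM \<Phi> (add_mset u (add_mset u X)) = 0"
proof -
  obtain g K where K: "finite K" "X = GG g K" using GG_ex by blast
  show ?thesis unfolding K(2) F2[OF K(1)] RD2_def
    by (simp add: gp gp_zero gp_alt gp_alt2 add_ac)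
qed

lemma DM_good: "good_phi \<Phi> \<Longrightarrow> good_phi (DM \<Phi>)"
  unfolding good_phi_def[of "DM \<Phi>"] using DM_lin DM_hom DM_alt by blast


lemma diff_diff: "A - B - C = A - (B \<union> C)"
  by auto

lemma rho_sum: "\<rho> x (\<Sum>a\<in>K. f a) = (\<Sum>a\<in>K. \<rho> x (f a))"
  by (induction K rule: infinite_finite_induct) auto

lemma rho_psum: "\<rho> x (psum K F) = psum K (\<lambda>a b. \<rho> x (F a b))"
  unfolding psum_def by (simp add: rho_sum)

lemma jac2: "br (br a b) c + br (br b c) a + br (br c a) b = 0"
proof -
  have "br (br a b) c = br c (br a b)" "br (br b c) a = br a (br b c)" "br (br c a) b = br b (br c a)"
    by (rule br_comm)+
  then show ?thesis using jacobi[of c a b] by (simp add: add_ac)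
qed

lemma DM_DM:
  assumes gp: "good_phi \<Phi>"
  shows "DM (DM \<Phi>) X = 0"
proof -
  obtain g K where K: "finite K" "X = GG g K" using GG_ex by blast
  define T1 where "T1 = psum K (\<lambda>a b. \<Sum>c\<in>K-{a,b}. \<Phi> (add_mset (br (br (g a) (g b)) (g c)) (GG g (K - {a,b} - {c}))))"
  define T2 where "T2 = psum K (\<lambda>a b. psum (K-{a,b}) (\<lambda>c d. \<Phi> (add_mset (br (g c) (g d)) (add_mset (br (g a) (g b)) (GG g (K-{a,b}-{c,d}))))))"
  define T3 where "T3 = psum K (\<lambda>a b. \<rho> (br (g a) (g b)) (\<Phi> (GG g (K-{a,b}))))"
  define T4 where "T4 = psum K (\<lambda>a b. \<Sum>c\<in>K-{a,b}. \<rho> (g c) (\<Phi> (add_mset (br (g a) (g b)) (GG g (K-{a,b}-{c})))))"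
  define T5 where "T5 = (\<Sum>a\<in>K. psum (K-{a}) (\<lambda>c d. \<rho> (g a) (\<Phi> (add_mset (br (g c) (g d)) (GG g (K-{a}-{c,d}))))))"
  define T6 where "T6 = (\<Sum>a\<in>K. \<Sum>c\<in>K-{a}. \<rho> (g a) (\<rho> (g c) (\<Phi> (GG g (K-{a}-{c})))))"
  have e: "DM (DM \<Phi>) (GG g K) = T1 + T2 + T3 + T4 + T5 + T6"
    using K(1) unfolding T1_def T2_def T3_def T4_def T5_def T6_def
    by (simp add: DM_GG RD_def F1 RD1_def rho_sum rho_psum psum_add sum.distrib add_ac cong: psum_cong2)
  have t1: "T1 = 0"
  proof -
    define H where "H a b c = \<Phi> (add_mset (br (br (g a) (g b)) (g c)) (GG g (K - {a,b,c})))" for a b c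
    have "T1 = psum K (\<lambda>a b. \<Sum>c\<in>K-{a,b}. H a b c)"
      unfolding T1_def H_def
      by (intro psum_cong sum.cong refl) (simp add: insert_commute diff_diff)
    also have "\<dots> = 0"
    proof (rule R4[OF K(1)])
      show "H a b c = H b a c" for a b c unfolding H_def by (simp add: br_comm insert_commute)
      show "H a b c + H b c a + H c a b = 0" for a b c
      proof -
        have s: "{b,c,a} = {a,b,c}" "{c,a,b} = {a,b,c}" by auto
        show ?thesis unfolding H_def s
          by (simp add: gp_lin[OF gp, symmetric] jac2 gp_zero[OF gp])
      qed
    qed
    finally show ?thesis .
  qed
  have t2: "T2 = 0"
  proof -
    define H where "H a b c d = \<Phi> (add_mset (br (g c) (g d)) (add_mset (br (g a) (g b)) (GG g (K - {a,b,c,d}))))" for a b c d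
    have "T2 = psum K (\<lambda>a b. psum (K-{a,b}) (\<lambda>c d. H a b c d))"
      unfolding T2_def H_def
      by (intro psum_cong refl) (simp add: insert_commute diff_diff)
    also have "\<dots> = 0"
    proof (rule R5[OF K(1)])
      show "H a b c d = H c d a b" for a b c d
      proof -
        have s: "{c,d,a,b} = {a,b,c,d}" by auto
        show ?thesis unfolding H_def s by (simp add: add_mset_commute)
      qed
      show "x + x = 0" for x :: 'm by simp
    qed
    finally show ?thesis .
  qed
  have t45: "T4 = T5"
  proof -
    define H where "H m a b = \<rho> (g m) (\<Phi> (add_mset (br (g a) (g b)) (GG g (K - {a,b,m}))))" for m a b
    have "T4 = psum K (\<lambda>a b. \<Sum>m\<in>K-{a,b}. H m a b)"
      unfolding T4_def H_def
      by (intro psum_cong sum.cong refl) (simp add: insert_commute diff_diff)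
    also have "\<dots> = (\<Sum>m\<in>K. psum (K - {m}) (\<lambda>a b. H m a b))" by (rule R3[OF K(1)])
    also have "\<dots> = T5"
      unfolding T5_def H_def
      by (intro psum_cong sum.cong refl) (simp add: insert_commute diff_diff)
    finally show ?thesis .
  qed
  have t36: "T3 = T6"
  proof -
    define F where "F a c = \<rho> (g a) (\<rho> (g c) (\<Phi> (GG g (K - {a,c}))))" for a c
    have "T6 = (\<Sum>a\<in>K. \<Sum>c\<in>K-{a}. F a c)"
      unfolding T6_def F_def
      by (intro sum.cong refl) (simp add: insert_commute diff_diff)
    also have "\<dots> = psum K (\<lambda>a b. F a b + F b a)" by (rule R1[OF K(1)])
    also have "\<dots> = T3"
      unfolding T3_def F_def by (intro psum_cong refl) (simp add: rho_br insert_commute)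
    finally show ?thesis by simp
  qed
  show ?thesis using e t1 t2 t45 t36 K(2) by (simp add: add_ac)
qed


lemma go_phi: "good_omega \<Phi> \<Omega> \<Longrightarrow> good_phi (\<Omega> x)"
  by (simp add: good_omega_def)
lemma go_sq: "good_omega \<Phi> \<Omega> \<Longrightarrow> \<Omega> (smL a x) X = smM (a^2) (\<Omega> x X)"
  by (simp add: good_omega_def)
lemma go_add: "good_omega \<Phi> \<Omega> \<Longrightarrow> \<Omega> (x + y) X = \<Omega> x X + \<Omega> y X + \<Phi> (add_mset x (add_mset y X))"
  by (simp add: good_omega_def)

lemma gp_alt3: "good_phi \<Phi> \<Longrightarrow> \<Phi> (add_mset c (add_mset d (add_mset u (add_mset u X)))) = 0"
  using gp_alt[of \<Phi> u "add_mset c (add_mset d X)"] by (simp add: add_mset_commute)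

lemma smM_comm: "smM a (smM b m) = smM b (smM a m)"
  by (metis mult.commute smM_mult)
lemma smM_sq: "smM (c^2) m = smM c (smM c m)"
  by (simp add: power2_eq_square smM_mult)

definition RDelta2 :: "('l multiset \<Rightarrow> 'm) \<Rightarrow> ('l \<Rightarrow> 'l multiset \<Rightarrow> 'm) \<Rightarrow> 'l \<Rightarrow> 'l \<Rightarrow> 'l \<Rightarrow> (nat \<Rightarrow> 'l) \<Rightarrow> nat set \<Rightarrow> 'm" where
  "RDelta2 \<Phi> \<Omega> x y z g K = \<rho> x (\<Phi> (add_mset x (add_mset y (add_mset z (GG g K))))) +
     \<rho> y (\<Omega> x (add_mset z (GG g K))) + \<rho> z (\<Omega> x (add_mset y (GG g K))) +
     (\<Sum>a\<in>K. \<rho> (g a) (\<Omega> x (add_mset y (add_mset z (GG g (K - {a})))))) +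
     \<Phi> (add_mset (sq x) (add_mset y (add_mset z (GG g K)))) +
     \<Phi> (add_mset (br x y) (add_mset x (add_mset z (GG g K)))) +
     \<Phi> (add_mset (br x z) (add_mset x (add_mset y (GG g K)))) +
     (\<Sum>a\<in>K. \<Phi> (add_mset (br x (g a)) (add_mset x (add_mset y (add_mset z (GG g (K - {a}))))))) +
     \<Omega> x (add_mset (br y z) (GG g K)) +
     (\<Sum>a\<in>K. \<Omega> x (add_mset (br y (g a)) (add_mset z (GG g (K - {a}))))) +
     (\<Sum>a\<in>K. \<Omega> x (add_mset (br z (g a)) (add_mset y (GG g (K - {a}))))) +
     psum K (\<lambda>a b. \<Omega> x (add_mset (br (g a) (g b)) (add_mset y (add_mset z (GG g (K - {a,b}))))))"

lemma RDelta1_insert: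
  assumes "finite K" "k \<notin> K"
  shows "RDelta1 \<Phi> \<Omega> x y g (insert k K) = RDelta2 \<Phi> \<Omega> x y (g k) g K"
  using assms unfolding RDelta1_def RDelta2_def
  by (simp add: GG_insert psum_insert' GG_diff_insert neq_fresh diff_fresh br_comm insert_commute add_mset_commute
      sum.distrib add_ac cong: psum_cong2 if_cong)

lemma D2:
  assumes K: "finite K"
  shows "DeltaM \<Phi> \<Omega> x (add_mset y (add_mset z (GG g K))) = RDelta2 \<Phi> \<Omega> x y z g K"
proof -
  obtain k where k: "k \<notin> K" using fresh_ex[OF K] by blast
  have e: "add_mset z (GG g K) = GG (g(k:=z)) (insert k K)"
    using K k by (simp add: GG_insert GG_upd)
  have "DeltaM \<Phi> \<Omega> x (add_mset y (add_mset z (GG g K))) = RDelta2 \<Phi> \<Omega> x y z (g(k:=z)) K"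
    using K k by (simp add: e D1 RDelta1_insert)
  also have "\<dots> = RDelta2 \<Phi> \<Omega> x y z g K" unfolding RDelta2_def using k
    by (simp add: GG_upd neq_fresh cong: sum.cong psum_cong2)
  finally show ?thesis .
qed

lemma Delta_lin:
  assumes gp: "good_phi \<Phi>" and go: "good_omega \<Phi> \<Omega>"
  shows "DeltaM \<Phi> \<Omega> x (add_mset (u + v) X) = DeltaM \<Phi> \<Omega> x (add_mset u X) + DeltaM \<Phi> \<Omega> x (add_mset v X)"
proof -
  obtain g K where K: "finite K" "X = GG g K" using GG_ex by blast
  show ?thesis unfolding K(2) D1[OF K(1)] RDelta1_def
    by (simp add: gp go_phi[OF go] gp_lin gp_lin2 gp_lin3 sum.distrib psum_add add_ac)
qed

lemma Delta_hom:
  assumes gp: "good_phi \<Phi>" and go: "good_omega \<Phi> \<Omega>"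
  shows "DeltaM \<Phi> \<Omega> x (add_mset (smL c u) X) = smM c (DeltaM \<Phi> \<Omega> x (add_mset u X))"
proof -
  obtain g K where K: "finite K" "X = GG g K" using GG_ex by blast
  show ?thesis unfolding K(2) D1[OF K(1)] RDelta1_def
    by (simp add: gp go_phi[OF go] gp_lin gp_lin2 gp_lin3 gp_hom gp_hom2 gp_hom3 br_smL br_smL_l rho_sm rho_smM
        smM_sum smM_psum sum.distrib psum_add)
       (simp add: add_mset_commute add_ac)
qed

lemma Delta_alt:
  assumes gp: "good_phi \<Phi>" and go: "good_omega \<Phi> \<Omega>"
  shows "DeltaM \<Phi> \<Omega> x (add_mset u (add_mset u X)) = 0"
proof -
  obtain g K where K: "finite K" "X = GG g K" using GG_ex by blast
  show ?thesis unfolding K(2) D2[OF K(1)] RDelta2_def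
    by (simp add: gp go_phi[OF go] gp_zero gp_alt gp_alt2 gp_alt2' gp_alt3 br_comm add_ac)
qed

lemma Delta_sq:
  assumes gp: "good_phi \<Phi>" and go: "good_omega \<Phi> \<Omega>"
  shows "DeltaM \<Phi> \<Omega> (smL c x) X = smM (c^2) (DeltaM \<Phi> \<Omega> x X)"
proof -
  obtain g K where K: "finite K" "X = GG g K" using GG_ex by blast
  show ?thesis unfolding K(2) DeltaM_GG[OF K(1)] RDelta_def
    by (simp add: gp go_phi[OF go] go_sq[OF go] gp_lin gp_lin2 gp_hom gp_hom2 gp_alt br_smL br_smL_l rho_sm rho_smM
        sq_sm th_sm smM_sum smM_psum sum.distrib psum_add smM_sq smM_mult smM_add_l)
       (simp add: smM_comm add_mset_commute add_ac)
qed

lemma Delta_add: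
  assumes gp: "good_phi \<Phi>" and go: "good_omega \<Phi> \<Omega>"
  shows "DeltaM \<Phi> \<Omega> (x + y) X = DeltaM \<Phi> \<Omega> x X + DeltaM \<Phi> \<Omega> y X + DM \<Phi> (add_mset x (add_mset y X))"
proof -
  obtain g K where K: "finite K" "X = GG g K" using GG_ex by blast
  show ?thesis unfolding K(2) DeltaM_GG[OF K(1)] RDelta_def F2[OF K(1)] RD2_def
    by (simp add: gp go_add[OF go] gp_lin gp_lin2 sq_add sum.distrib psum_add)
       (simp add: add_mset_commute add_ac)
qed

lemma Delta_good:
  assumes gp: "good_phi \<Phi>" and go: "good_omega \<Phi> \<Omega>"
  shows "good_omega (DM \<Phi>) (DeltaM \<Phi> \<Omega>)"
  unfolding good_omega_def good_phi_def
  using Delta_lin[OF gp go] Delta_hom[OF gp go] Delta_alt[OF gp go] Delta_sq[OF gp go] Delta_add[OF gp go]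
  by blast


lemma swap_neq:
  fixes f :: "nat \<Rightarrow> nat \<Rightarrow> 'm::ab_group_add"
  assumes K: "finite K"
  shows "(\<Sum>a\<in>K. \<Sum>c\<in>K-{a}. f a c) = (\<Sum>c\<in>K. \<Sum>a\<in>K-{c}. f a c)"
  using R1[OF K, of f] R1[OF K, of "\<lambda>c a. f a c"] by (simp add: add.commute)

lemma jac3: "br x (br a b) = br (br x a) b + br (br x b) a"
proof -
  have "br x (br a b) + br a (br b x) + br b (br x a) = 0" by (rule jacobi)
  moreover have "br a (br b x) = br (br x b) a" by (simp add: br_comm)
  moreover have "br b (br x a) = br (br x a) b" by (simp add: br_comm)
  ultimately show ?thesis by (metis L2 add.assoc add.commute add_left_cancel)
qed

lemma Delta_Delta:
  assumes gp: "good_phi \<Phi>" and go: "good_omega \<Phi> \<Omega>"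
  shows "DeltaM (DM \<Phi>) (DeltaM \<Phi> \<Omega>) x X = 0"
proof -
  obtain g K where K: "finite K" "X = GG g K" using GG_ex by blast
  define A1 where "A1 = (\<Sum>a\<in>K. \<rho> x (\<Phi> (add_mset (br x (g a)) (GG g (K - {a})))))"
  define A2 where "A2 = psum K (\<lambda>a b. \<rho> x (\<Phi> (add_mset (br (g a) (g b)) (add_mset x (GG g (K - {a,b}))))))"
  define A3 where "A3 = \<rho> x (\<rho> x (\<Phi> (GG g K)))"
  define A4 where "A4 = (\<Sum>a\<in>K. \<rho> x (\<rho> (g a) (\<Phi> (add_mset x (GG g (K - {a}))))))"
  define B1 where "B1 = (\<Sum>a\<in>K. \<rho> (g a) (\<rho> x (\<Phi> (add_mset x (GG g (K - {a}))))))"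
  define B2 where "B2 = (\<Sum>a\<in>K. \<Sum>c\<in>K-{a}. \<rho> (g a) (\<rho> (g c) (\<Omega> x (GG g (K - {a} - {c})))))"
  define B3 where "B3 = (\<Sum>a\<in>K. \<rho> (g a) (\<Phi> (add_mset (sq x) (GG g (K - {a})))))"
  define B4 where "B4 = (\<Sum>a\<in>K. \<Sum>c\<in>K-{a}. \<rho> (g a) (\<Phi> (add_mset (br x (g c)) (add_mset x (GG g (K - {a} - {c}))))))"
  define B5 where "B5 = (\<Sum>a\<in>K. psum (K-{a}) (\<lambda>c d. \<rho> (g a) (\<Omega> x (add_mset (br (g c) (g d)) (GG g (K - {a} - {c,d}))))))"
  define C1 where "C1 = (\<Sum>a\<in>K. \<Phi> (add_mset (br (sq x) (g a)) (GG g (K - {a}))))"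
  define C2 where "C2 = psum K (\<lambda>a b. \<Phi> (add_mset (br (g a) (g b)) (add_mset (sq x) (GG g (K - {a,b})))))"
  define C3 where "C3 = \<rho> (sq x) (\<Phi> (GG g K))"
  define D1 where "D1 = (\<Sum>a\<in>K. \<Phi> (add_mset (br (br x (g a)) x) (GG g (K - {a}))))"
  define D2 where "D2 = (\<Sum>a\<in>K. \<Sum>c\<in>K-{a}. \<Phi> (add_mset (br (br x (g a)) (g c)) (add_mset x (GG g (K - {a} - {c})))))"
  define D3 where "D3 = (\<Sum>a\<in>K. \<Sum>c\<in>K-{a}. \<Phi> (add_mset (br x (g c)) (add_mset (br x (g a)) (GG g (K - {a} - {c})))))"
  define D4 where "D4 = (\<Sum>a\<in>K. psum (K-{a}) (\<lambda>c d. \<Phi> (add_mset (br (g c) (g d)) (add_mset (br x (g a)) (add_mset x (GG g (K - {a} - {c,d})))))))"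
  define D5 where "D5 = (\<Sum>a\<in>K. \<rho> (br x (g a)) (\<Phi> (add_mset x (GG g (K - {a})))))"
  define D7 where "D7 = (\<Sum>a\<in>K. \<Sum>c\<in>K-{a}. \<rho> (g c) (\<Phi> (add_mset (br x (g a)) (add_mset x (GG g (K - {a} - {c}))))))"
  define E1 where "E1 = psum K (\<lambda>a b. \<rho> x (\<Phi> (add_mset x (add_mset (br (g a) (g b)) (GG g (K - {a,b}))))))"
  define E2 where "E2 = psum K (\<lambda>a b. \<rho> (br (g a) (g b)) (\<Omega> x (GG g (K - {a,b}))))"
  define E3 where "E3 = psum K (\<lambda>a b. \<Sum>c\<in>K-{a,b}. \<rho> (g c) (\<Omega> x (add_mset (br (g a) (g b)) (GG g (K - {a,b} - {c})))))"
  define E4 where "E4 = psum K (\<lambda>a b. \<Phi> (add_mset (sq x) (add_mset (br (g a) (g b)) (GG g (K - {a,b})))))"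
  define E5 where "E5 = psum K (\<lambda>a b. \<Phi> (add_mset (br x (br (g a) (g b))) (add_mset x (GG g (K - {a,b})))))"
  define E6 where "E6 = psum K (\<lambda>a b. \<Sum>c\<in>K-{a,b}. \<Phi> (add_mset (br x (g c)) (add_mset x (add_mset (br (g a) (g b)) (GG g (K - {a,b} - {c}))))))"
  define E7 where "E7 = psum K (\<lambda>a b. \<Sum>c\<in>K-{a,b}. \<Omega> x (add_mset (br (br (g a) (g b)) (g c)) (GG g (K - {a,b} - {c}))))"
  define E8 where "E8 = psum K (\<lambda>a b. psum (K-{a,b}) (\<lambda>c d. \<Omega> x (add_mset (br (g c) (g d)) (add_mset (br (g a) (g b)) (GG g (K - {a,b} - {c,d}))))))"
  have e: "DeltaM (DM \<Phi>) (DeltaM \<Phi> \<Omega>) x (GG g K) = A1 + A2 + A3 + A4 + B1 + B2 + B3 + B4 + B5 + C1 + C2 + C3 + B3 +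
      D1 + D2 + D3 + D4 + D5 + A1 + D7 + E1 + E2 + E3 + E4 + E5 + E6 + E7 + E8"
    using K(1) unfolding A1_def A2_def A3_def A4_def B1_def B2_def B3_def B4_def B5_def C1_def C2_def C3_def
      D1_def D2_def D3_def D4_def D5_def D7_def E1_def E2_def E3_def E4_def E5_def E6_def E7_def E8_def
    by (simp add: DeltaM_GG RDelta_def F1 RD1_def F2 RD2_def D1 RDelta1_def
        rho_sum rho_psum psum_add sum.distrib add_ac cong: psum_cong2)
  have f2: "E1 = A2" unfolding E1_def A2_def by (intro psum_cong) (simp add: add_mset_commute)
  have f3: "C3 = A3" unfolding C3_def A3_def by (simp add: rho_sq)
  have f4: "D5 = A4 + B1" unfolding D5_def A4_def B1_def by (simp add: rho_br sum.distrib)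
  have f5: "E2 = B2"
  proof -
    define F where "F a c = \<rho> (g a) (\<rho> (g c) (\<Omega> x (GG g (K - {a,c}))))" for a c
    have "B2 = (\<Sum>a\<in>K. \<Sum>c\<in>K-{a}. F a c)"
      unfolding B2_def F_def by (intro sum.cong refl) (simp add: insert_commute diff_diff)
    also have "\<dots> = psum K (\<lambda>a b. F a b + F b a)" by (rule R1[OF K(1)])
    also have "\<dots> = E2"
      unfolding E2_def F_def by (intro psum_cong refl) (simp add: rho_br insert_commute)
    finally show ?thesis by simp
  qed
  have f7: "D7 = B4"
  proof -
    have "B4 = (\<Sum>a\<in>K. \<Sum>c\<in>K-{a}. \<rho> (g a) (\<Phi> (add_mset (br x (g c)) (add_mset x (GG g (K - {a,c}))))))"
      unfolding B4_def by (intro sum.cong refl) (simp add: insert_commute diff_diff)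
    also have "\<dots> = (\<Sum>c\<in>K. \<Sum>a\<in>K-{c}. \<rho> (g a) (\<Phi> (add_mset (br x (g c)) (add_mset x (GG g (K - {a,c}))))))"
      by (rule swap_neq[OF K(1)])
    also have "\<dots> = D7"
      unfolding D7_def by (intro sum.cong refl) (simp add: insert_commute diff_diff)
    finally show ?thesis by simp
  qed
  have f8: "E3 = B5"
  proof -
    define H where "H m a b = \<rho> (g m) (\<Omega> x (add_mset (br (g a) (g b)) (GG g (K - {a,b,m}))))" for m a b
    have "E3 = psum K (\<lambda>a b. \<Sum>m\<in>K-{a,b}. H m a b)"
      unfolding E3_def H_def
      by (intro psum_cong sum.cong refl) (simp add: insert_commute diff_diff)
    also have "\<dots> = (\<Sum>m\<in>K. psum (K - {m}) (\<lambda>a b. H m a b))" by (rule R3[OF K(1)])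
    also have "\<dots> = B5"
      unfolding B5_def H_def
      by (intro psum_cong sum.cong refl) (simp add: insert_commute diff_diff)
    finally show ?thesis .
  qed
  have bs: "br (br x y) x = br (sq x) y" for y by (simp only: br_sq) (rule br_comm)
  have f9: "D1 = C1" unfolding D1_def C1_def by (simp only: bs)
  have f10: "E4 = C2" unfolding E4_def C2_def by (intro psum_cong) (simp add: add_mset_commute)
  have f11: "E5 = D2"
  proof -
    define F where "F a c = \<Phi> (add_mset (br (br x (g a)) (g c)) (add_mset x (GG g (K - {a,c}))))" for a c
    have "D2 = (\<Sum>a\<in>K. \<Sum>c\<in>K-{a}. F a c)"
      unfolding D2_def F_def by (intro sum.cong refl) (simp add: insert_commute diff_diff)
    also have "\<dots> = psum K (\<lambda>a b. F a b + F b a)" by (rule R1[OF K(1)])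
    also have "\<dots> = E5"
      unfolding E5_def F_def
      by (intro psum_cong refl) (simp add: gp_lin[OF gp, symmetric] jac3 insert_commute)
    finally show ?thesis by simp
  qed
  have f12: "D3 = 0"
  proof -
    define F where "F a c = \<Phi> (add_mset (br x (g c)) (add_mset (br x (g a)) (GG g (K - {a,c}))))" for a c
    have "D3 = (\<Sum>a\<in>K. \<Sum>c\<in>K-{a}. F a c)"
      unfolding D3_def F_def by (intro sum.cong refl) (simp add: insert_commute diff_diff)
    also have "\<dots> = psum K (\<lambda>a b. F a b + F b a)" by (rule R1[OF K(1)])
    also have "\<dots> = 0"
    proof -
      have "F a b = F b a" for a b unfolding F_def by (simp add: add_mset_commute insert_commute)
      then show ?thesis by simp
    qed
    finally show ?thesis .
  qed
  have f13: "E6 = D4"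
  proof -
    define H where "H m a b = \<Phi> (add_mset (br (g a) (g b)) (add_mset (br x (g m)) (add_mset x (GG g (K - {a,b,m})))))" for m a b
    have "E6 = psum K (\<lambda>a b. \<Sum>m\<in>K-{a,b}. H m a b)"
      unfolding E6_def H_def
      by (intro psum_cong sum.cong refl) (simp add: insert_commute diff_diff add_mset_commute)
    also have "\<dots> = (\<Sum>m\<in>K. psum (K - {m}) (\<lambda>a b. H m a b))" by (rule R3[OF K(1)])
    also have "\<dots> = D4"
      unfolding D4_def H_def
      by (intro psum_cong sum.cong refl) (simp add: insert_commute diff_diff)
    finally show ?thesis .
  qed
  have f14: "E7 = 0"
  proof -
    define H where "H a b c = \<Omega> x (add_mset (br (br (g a) (g b)) (g c)) (GG g (K - {a,b,c})))" for a b c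
    have "E7 = psum K (\<lambda>a b. \<Sum>c\<in>K-{a,b}. H a b c)"
      unfolding E7_def H_def
      by (intro psum_cong sum.cong refl) (simp add: insert_commute diff_diff)
    also have "\<dots> = 0"
    proof (rule R4[OF K(1)])
      show "H a b c = H b a c" for a b c unfolding H_def by (simp add: br_comm insert_commute)
      show "H a b c + H b c a + H c a b = 0" for a b c
      proof -
        have s: "{b,c,a} = {a,b,c}" "{c,a,b} = {a,b,c}" by auto
        show ?thesis unfolding H_def s
          by (simp add: gp_lin[OF go_phi[OF go], symmetric] jac2 gp_zero[OF go_phi[OF go]])
      qed
    qed
    finally show ?thesis .
  qed
  have f15: "E8 = 0"
  proof -
    define H where "H a b c d = \<Omega> x (add_mset (br (g c) (g d)) (add_mset (br (g a) (g b)) (GG g (K - {a,b,c,d}))))" for a b c d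
    have "E8 = psum K (\<lambda>a b. psum (K-{a,b}) (\<lambda>c d. H a b c d))"
      unfolding E8_def H_def
      by (intro psum_cong refl) (simp add: insert_commute diff_diff)
    also have "\<dots> = 0"
    proof (rule R5[OF K(1)])
      show "H a b c d = H c d a b" for a b c d
      proof -
        have s: "{c,d,a,b} = {a,b,c,d}" by auto
        show ?thesis unfolding H_def s by (simp add: add_mset_commute)
      qed
      show "x + x = 0" for x :: 'm by simp
    qed
    finally show ?thesis .
  qed
  show ?thesis using e f2 f3 f4 f5 f7 f8 f9 f10 f11 f12 f13 f14 f15 K(2) by (simp add: add_ac)
qed


lemma dCE_cong:
  assumes "\<And>ys. length ys = N \<Longrightarrow> \<phi> ys = \<phi>' ys" "length xs = Suc N"
  shows "dCE \<rho> br \<phi> xs = dCE \<rho> br \<phi>' xs"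
  unfolding dCE_def using assms
  by (intro arg_cong2[where f="(+)"] sum.cong refl) (auto simp: assms(1))

lemma deltaLR_cong:
  assumes "\<And>ys. length ys = N \<Longrightarrow> \<phi> ys = \<phi>' ys" "\<And>y ys. length ys = N - 2 \<Longrightarrow> \<omega> y ys = \<omega>' y ys"
    "length zs = N - 1" "2 \<le> N"
  shows "deltaLR \<rho> br sq \<phi> \<omega> x zs = deltaLR \<rho> br sq \<phi>' \<omega>' x zs"
  unfolding deltaLR_def using assms
  by (intro arg_cong2[where f="(+)"] sum.cong refl arg_cong[where f="\<rho> _"]) (auto simp: assms(1,2))

definition rep :: "nat \<Rightarrow> ('l list \<Rightarrow> 'm) \<times> ('l \<Rightarrow> 'l list \<Rightarrow> 'm) \<Rightarrow> ('l multiset \<Rightarrow> 'm) \<Rightarrow> ('l \<Rightarrow> 'l multiset \<Rightarrow> 'm) \<Rightarrow> bool" where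
  "rep N c \<Phi> \<Omega> \<longleftrightarrow> (\<forall>xs. length xs = N \<longrightarrow> fst c xs = \<Phi> (mset xs)) \<and>
     (\<forall>x zs. length zs = N - 2 \<longrightarrow> snd c x zs = \<Omega> x (mset zs))"

lemma rep_d:
  assumes r: "rep N c \<Phi> \<Omega>" and N: "2 \<le> N"
  shows "rep (N + 1) (dLR \<rho> br sq c) (DM \<Phi>) (DeltaM \<Phi> \<Omega>)"
proof -
  obtain \<phi> \<omega> where c: "c = (\<phi>, \<omega>)" by fastforce
  have r1: "\<And>ys. length ys = N \<Longrightarrow> \<phi> ys = \<Phi> (mset ys)" and r2: "\<And>y ys. length ys = N - 2 \<Longrightarrow> \<omega> y ys = \<Omega> y (mset ys)"
    using r c by (auto simp: rep_def)
  show ?thesis unfolding rep_def c dLR_def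
  proof (simp, intro conjI allI impI)
    fix xs :: "'l list" assume "length xs = Suc N"
    then have "dCE \<rho> br \<phi> xs = dCE \<rho> br (\<lambda>xs. \<Phi> (mset xs)) xs" by (intro dCE_cong[of N] r1)
    then show "dCE \<rho> br \<phi> xs = DM \<Phi> (mset xs)" by (simp add: DM_list)
  next
    fix x and zs :: "'l list" assume "length zs = N - Suc 0"
    then have "deltaLR \<rho> br sq \<phi> \<omega> x zs = deltaLR \<rho> br sq (\<lambda>xs. \<Phi> (mset xs)) (\<lambda>y zs. \<Omega> y (mset zs)) x zs"
      using N by (intro deltaLR_cong[of N] r1 r2) auto
    then show "deltaLR \<rho> br sq \<phi> \<omega> x zs = DeltaM \<Phi> \<Omega> x (mset zs)" by (simp add: DeltaM_list)
  qed
qed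

lemma rep_zero:
  assumes "rep N c \<Phi> \<Omega>" "\<And>X. \<Phi> X = 0" "\<And>x X. \<Omega> x X = 0"
  shows "LR_zero N c"
  using assms unfolding rep_def LR_zero_def by (cases c) auto

lemma mset_two:
  assumes "i < j" "j < length xs"
  shows "mset xs = add_mset (xs ! j) (add_mset (xs ! i) (mset (del i (del j xs))))"
proof -
  have "mset xs = add_mset (xs ! j) (mset (del j xs))"
    using assms by (simp add: del_mset insert_DiffM)
  moreover have "mset (del j xs) = add_mset (xs ! i) (mset (del i (del j xs)))"
  proof -
    have "i < length (del j xs)" using assms by simp
    then have "mset (del i (del j xs)) = mset (del j xs) - {# del j xs ! i #}" by (rule del_mset)
    moreover have "del j xs ! i = xs ! i" using assms by (simp add: del_nth_lt)
    moreover have "xs ! i \<in># mset (del j xs)"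
      using assms \<open>i < length (del j xs)\<close> \<open>del j xs ! i = xs ! i\<close> by (metis nth_mem_mset)
    ultimately show ?thesis by (simp add: insert_DiffM)
  qed
  ultimately show ?thesis by simp
qed

lemma rep_cochain:
  assumes r: "rep N c \<Phi> \<Omega>" and N: "2 \<le> N" and gp: "good_phi \<Phi>" and go: "good_omega \<Phi> \<Omega>"
  shows "LR_cochain \<iota> smL smM N c"
proof -
  obtain \<phi> \<omega> where c: "c = (\<phi>, \<omega>)" by fastforce
  have r1: "\<And>ys. length ys = N \<Longrightarrow> \<phi> ys = \<Phi> (mset ys)" and r2: "\<And>y ys. length ys = N - 2 \<Longrightarrow> \<omega> y ys = \<Omega> y (mset ys)"
    using r c by (auto simp: rep_def)
  have alt: "alternating_on M f" if "\<And>ys. length ys = M \<Longrightarrow> f ys = F (mset ys)" "good_phi F" for M f F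
    unfolding alternating_on_def
  proof (intro allI impI)
    fix xs :: "'l list" and i j assume h: "length xs = M" "i < j" "j < M" "xs ! i = xs ! j"
    have "f xs = F (mset xs)" using that h by simp
    also have "\<dots> = 0" using mset_two[of i j xs] h gp_alt[OF that(2)] by simp
    finally show "f xs = 0" .
  qed
  have ml: "multilinear_on S smL smM M f" if "\<And>ys. length ys = M \<Longrightarrow> f ys = F (mset ys)" "good_phi F" for S M f F
    unfolding multilinear_on_def using that by (simp add: gp_lin gp_hom)
  have h1: "alternating_on N \<phi>" using alt[OF r1 gp] by simp
  have h2: "multilinear_on UNIV smL smM N \<phi>" using ml[OF r1 gp] by simp
  have h3: "\<forall>x. alternating_on (N - 2) (\<omega> x) \<and> multilinear_on (range \<iota>) smL smM (N - 2) (\<omega> x)"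
    using alt[OF r2 go_phi[OF go]] ml[OF r2 go_phi[OF go]] by blast
  have h4: "\<forall>c x zs. length zs = N - 2 \<longrightarrow> \<omega> (smL (\<iota> c) x) zs = smM (\<iota> (c ^ 2)) (\<omega> x zs)"
    by (simp add: r2 go_sq[OF go] iota_pow)
  have h5: "\<forall>x y zs. length zs = N - 2 \<longrightarrow> \<omega> (x + y) zs = \<omega> x zs + \<omega> y zs + \<phi> (x # y # zs)"
    using N by (simp add: r1 r2 go_add[OF go])
  have h6: "\<forall>a x zs. length zs = N - 2 \<longrightarrow> \<omega> (smL a x) zs = smM (a ^ 2) (\<omega> x zs)"
    by (simp add: r2 go_sq[OF go])
  have h7: "\<forall>a x us vs z. length us + length vs + 1 = N - 2 \<longrightarrow>
        \<omega> x (us @ smL a z # vs) = smM a (\<omega> x (us @ z # vs))"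
    by (simp add: r2 gp_hom[OF go_phi[OF go]])
  show ?thesis unfolding LR_cochain_def c prod.case using h1 h2 h3 h4 h5 h6 h7 by blast
qed


lemma M_eq: "(a::'m) + b = 0 \<Longrightarrow> a = b"
  by (metis M2' add.right_neutral)

lemma sym_swap:
  fixes f :: "'l list \<Rightarrow> 'm"
  assumes alt: "alternating_on n f"
    and add: "\<And>us vs x y. length us + length vs + 1 = n \<Longrightarrow> f (us @ (x + y) # vs) = f (us @ x # vs) + f (us @ y # vs)"
    and len: "length (us @ x # y # vs) = n"
  shows "f (us @ x # y # vs) = f (us @ y # x # vs)"
proof -
  have z: "f (us @ z # z # vs) = 0" for z
  proof -
    have i: "(us @ z # z # vs) ! length us = z" by simp
    have j: "(us @ z # z # vs) ! Suc (length us) = z" by (simp add: nth_append)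
    have "length (us @ z # z # vs) = n" using len by simp
    moreover have "Suc (length us) < n" using len by simp
    ultimately show ?thesis using alt i j unfolding alternating_on_def
      by (metis lessI)
  qed
  have a2: "f (us @ z # (x + y) # vs) = f (us @ z # x # vs) + f (us @ z # y # vs)" for z
    using add[of "us @ [z]" vs x y] len by simp
  have "0 = f (us @ (x + y) # (x + y) # vs)" using z by simp
  also have "\<dots> = f (us @ x # (x + y) # vs) + f (us @ y # (x + y) # vs)" using add[of us "(x+y) # vs" x y] len by simp
  also have "\<dots> = f (us @ x # y # vs) + f (us @ y # x # vs)" by (simp add: a2 z)
  finally show ?thesis using M_eq by metis
qed

lemma sym_move:
  fixes f :: "'l list \<Rightarrow> 'm"
  assumes alt: "alternating_on n f"
    and add: "\<And>us vs x y. length us + length vs + 1 = n \<Longrightarrow> f (us @ (x + y) # vs) = f (us @ x # vs) + f (us @ y # vs)"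
  shows "length (pre @ us @ x # vs) = n \<Longrightarrow> f (pre @ us @ x # vs) = f (pre @ x # us @ vs)"
proof (induction us arbitrary: pre)
  case Nil
  then show ?case by simp
next
  case (Cons u us)
  have "f (pre @ (u # us) @ x # vs) = f ((pre @ [u]) @ us @ x # vs)" by simp
  also have "\<dots> = f ((pre @ [u]) @ x # us @ vs)" using Cons by (intro Cons.IH) simp
  also have "\<dots> = f (pre @ u # x # us @ vs)" by simp
  also have "\<dots> = f (pre @ x # u # us @ vs)" using Cons.prems by (intro sym_swap[OF alt add]) auto
  finally show ?case by simp
qed

lemma sym_mset:
  fixes f :: "'l list \<Rightarrow> 'm"
  assumes alt: "alternating_on n f"
    and add: "\<And>us vs x y. length us + length vs + 1 = n \<Longrightarrow> f (us @ (x + y) # vs) = f (us @ x # vs) + f (us @ y # vs)"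
  shows "mset xs = mset ys \<Longrightarrow> length (pre @ xs) = n \<Longrightarrow> f (pre @ xs) = f (pre @ ys)"
proof (induction xs arbitrary: pre ys)
  case Nil
  then show ?case by simp
next
  case (Cons x xs)
  have "x \<in> set ys" using Cons.prems(1) by (metis list.set_intros(1) set_mset_mset)
  then obtain us vs where ys: "ys = us @ x # vs" by (meson split_list)
  have m: "mset xs = mset (us @ vs)" using Cons.prems(1) ys by simp
  have l: "length (pre @ us @ x # vs) = n" using Cons.prems m ys
    by (metis length_append mset_eq_length)
  have "f (pre @ ys) = f (pre @ x # us @ vs)" unfolding ys using sym_move[OF alt add l] .
  also have "\<dots> = f ((pre @ [x]) @ (us @ vs))" by simp
  also have "\<dots> = f ((pre @ [x]) @ xs)" using Cons.IH[of "us @ vs" "pre @ [x]"] m Cons.prems(2) by simp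
  finally show ?case by simp
qed

definition liftM :: "nat \<Rightarrow> ('l list \<Rightarrow> 'm) \<Rightarrow> 'l multiset \<Rightarrow> 'm" where
  "liftM n f X = (if size X = n then Mof f X else 0)"

lemma liftM_list:
  fixes f :: "'l list \<Rightarrow> 'm"
  assumes alt: "alternating_on n f"
    and add: "\<And>us vs x y. length us + length vs + 1 = n \<Longrightarrow> f (us @ (x + y) # vs) = f (us @ x # vs) + f (us @ y # vs)"
    and len: "length xs = n"
  shows "liftM n f (mset xs) = f xs"
proof -
  have "\<exists>ys. mset ys = mset xs" by blast
  then have e: "mset (SOME ys. mset ys = mset xs) = mset xs" by (rule someI_ex)
  define ys where "ys = (SOME ys. mset ys = mset xs)"
  have e': "mset ys = mset xs" using e unfolding ys_def .
  have l: "length ys = n" using e' len by (metis mset_eq_length)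
  have "f ([] @ ys) = f ([] @ xs)" using sym_mset[OF alt add e', of "[]"] l by simp
  then have "f ys = f xs" by simp
  moreover have "size (mset xs) = n" using len by simp
  ultimately show ?thesis unfolding liftM_def Mof_def ys_def[symmetric] by simp
qed

lemma liftM_good:
  fixes f :: "'l list \<Rightarrow> 'm"
  assumes alt: "alternating_on n f"
    and add: "\<And>us vs x y. length us + length vs + 1 = n \<Longrightarrow> f (us @ (x + y) # vs) = f (us @ x # vs) + f (us @ y # vs)"
    and hom: "\<And>us vs x a. length us + length vs + 1 = n \<Longrightarrow> f (us @ smL a x # vs) = smM a (f (us @ x # vs))"
  shows "good_phi (liftM n f)"
  unfolding good_phi_def
proof (intro conjI allI)
  fix u v :: 'l and X :: "'l multiset"
  obtain zs where zs: "mset zs = X" using ex_mset by metis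
  show "liftM n f (add_mset (u + v) X) = liftM n f (add_mset u X) + liftM n f (add_mset v X)"
  proof (cases "Suc (length zs) = n")
    case True
    then show ?thesis using liftM_list[OF alt add, of "(u+v) # zs"] liftM_list[OF alt add, of "u # zs"]
        liftM_list[OF alt add, of "v # zs"] add[of "[]" zs u v] zs by simp
  next
    case False
    then show ?thesis unfolding liftM_def using zs by auto
  qed
next
  fix a and u :: 'l and X :: "'l multiset"
  obtain zs where zs: "mset zs = X" using ex_mset by metis
  show "liftM n f (add_mset (smL a u) X) = smM a (liftM n f (add_mset u X))"
  proof (cases "Suc (length zs) = n")
    case True
    then show ?thesis using liftM_list[OF alt add, of "smL a u # zs"] liftM_list[OF alt add, of "u # zs"]
        hom[of "[]" zs a u] zs by simp
  next
    case False
    then show ?thesis unfolding liftM_def using zs by auto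
  qed
next
  fix u :: 'l and X :: "'l multiset"
  obtain zs where zs: "mset zs = X" using ex_mset by metis
  show "liftM n f (add_mset u (add_mset u X)) = 0"
  proof (cases "Suc (Suc (length zs)) = n")
    case True
    have "f (u # u # zs) = 0" using alt True unfolding alternating_on_def
      by (metis Suc_less_eq length_Cons nth_Cons_0 nth_Cons_Suc zero_less_Suc)
    then show ?thesis using liftM_list[OF alt add, of "u # u # zs"] True zs by simp
  next
    case False
    then show ?thesis unfolding liftM_def using zs by auto
  qed
qed


lemma part3:
  assumes n: "2 \<le> n" and c: "LR_cochain \<iota> smL smM n c"
  shows "LR_cochain \<iota> smL smM (n + 1) (dLR \<rho> br sq c) \<and> LR_zero (n + 2) (dLR \<rho> br sq (dLR \<rho> br sq c))"
proof -
  obtain \<phi> \<omega> where cc: "c = (\<phi>, \<omega>)" by fastforce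
  note C = c[unfolded cc LR_cochain_def prod.case]
  have altp: "alternating_on n \<phi>" using C by blast
  have mlp: "multilinear_on UNIV smL smM n \<phi>" using C by blast
  have addp: "\<And>us vs x y. length us + length vs + 1 = n \<Longrightarrow> \<phi> (us @ (x + y) # vs) = \<phi> (us @ x # vs) + \<phi> (us @ y # vs)"
    using mlp unfolding multilinear_on_def by blast
  have homp: "\<And>us vs x a. length us + length vs + 1 = n \<Longrightarrow> \<phi> (us @ smL a x # vs) = smM a (\<phi> (us @ x # vs))"
    using mlp unfolding multilinear_on_def by blast
  have alto: "alternating_on (n - 2) (\<omega> x)" for x using C by blast
  have addo: "\<And>us vs y z. length us + length vs + 1 = n - 2 \<Longrightarrow> \<omega> x (us @ (y + z) # vs) = \<omega> x (us @ y # vs) + \<omega> x (us @ z # vs)" for x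
    using C unfolding multilinear_on_def by blast
  have homo: "\<And>us vs z a. length us + length vs + 1 = n - 2 \<Longrightarrow> \<omega> x (us @ smL a z # vs) = smM a (\<omega> x (us @ z # vs))" for x
    using C by blast
  have sqo: "\<And>a x zs. length zs = n - 2 \<Longrightarrow> \<omega> (smL a x) zs = smM (a ^ 2) (\<omega> x zs)" using C by blast
  have addx: "\<And>x y zs. length zs = n - 2 \<Longrightarrow> \<omega> (x + y) zs = \<omega> x zs + \<omega> y zs + \<phi> (x # y # zs)" using C by blast
  define \<Phi> where "\<Phi> = liftM n \<phi>"
  define \<Omega> where "\<Omega> x = liftM (n - 2) (\<omega> x)" for x
  have gp: "good_phi \<Phi>" unfolding \<Phi>_def by (rule liftM_good[OF altp addp homp])
  have lp: "\<And>xs. length xs = n \<Longrightarrow> \<Phi> (mset xs) = \<phi> xs" unfolding \<Phi>_def by (rule liftM_list[OF altp addp])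
  have lo: "\<And>x zs. length zs = n - 2 \<Longrightarrow> \<Omega> x (mset zs) = \<omega> x zs" unfolding \<Omega>_def by (rule liftM_list[OF alto addo])
  have go: "good_omega \<Phi> \<Omega>" unfolding good_omega_def
  proof (intro conjI allI)
    fix x show "good_phi (\<Omega> x)" unfolding \<Omega>_def by (rule liftM_good[OF alto addo homo])
  next
    fix a x and X :: "'l multiset"
    obtain zs where zs: "mset zs = X" using ex_mset by metis
    show "\<Omega> (smL a x) X = smM (a\<^sup>2) (\<Omega> x X)"
    proof (cases "length zs = n - 2")
      case True
      have "\<Omega> (smL a x) X = \<omega> (smL a x) zs" using zs True lo by blast
      also have "\<dots> = smM (a\<^sup>2) (\<omega> x zs)" using sqo True by blast
      also have "\<omega> x zs = \<Omega> x X" using zs True lo by metis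
      finally show ?thesis .
    next
      case False then show ?thesis using zs unfolding \<Omega>_def liftM_def by auto
    qed
  next
    fix x y and X :: "'l multiset"
    obtain zs where zs: "mset zs = X" using ex_mset by metis
    show "\<Omega> (x + y) X = \<Omega> x X + \<Omega> y X + \<Phi> (add_mset x (add_mset y X))"
    proof (cases "length zs = n - 2")
      case True
      then have "\<Phi> (add_mset x (add_mset y X)) = \<phi> (x # y # zs)" using zs lp[of "x # y # zs"] n by simp
      moreover have "\<Omega> (x + y) X = \<omega> (x + y) zs" "\<Omega> x X = \<omega> x zs" "\<Omega> y X = \<omega> y zs"
        using zs True lo by blast+
      ultimately show ?thesis using addx[OF True] by simp
    next
      case False then show ?thesis using zs n unfolding \<Omega>_def \<Phi>_def liftM_def by auto
    qed
  qed
  have r: "rep n c \<Phi> \<Omega>" unfolding rep_def cc using lp lo by simp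
  have r1: "rep (n + 1) (dLR \<rho> br sq c) (DM \<Phi>) (DeltaM \<Phi> \<Omega>)" by (rule rep_d[OF r n])
  have r2: "rep (n + 1 + 1) (dLR \<rho> br sq (dLR \<rho> br sq c)) (DM (DM \<Phi>)) (DeltaM (DM \<Phi>) (DeltaM \<Phi> \<Omega>))"
    by (rule rep_d[OF r1]) (use n in simp)
  have "LR_cochain \<iota> smL smM (n + 1) (dLR \<rho> br sq c)"
    by (rule rep_cochain[OF r1 _ DM_good[OF gp] Delta_good[OF gp go]]) (use n in simp)
  moreover have "LR_zero (n + 2) (dLR \<rho> br sq (dLR \<rho> br sq c))"
    using rep_zero[OF r2 DM_DM[OF gp] Delta_Delta[OF gp go]] by (simp add: add.assoc)
  ultimately show ?thesis ..
qed

lemma part2: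
  assumes psi: "LR_C1 smL smM \<psi>"
  shows "LR_cochain \<iota> smL smM 2 (d1 \<rho> br sq \<psi>) \<and> LR_zero 3 (dLR \<rho> br sq (d1 \<rho> br sq \<psi>))"
proof -
  define f where "f xs = \<psi> (hd xs)" for xs :: "'l list"
  have alt: "alternating_on 1 f" unfolding alternating_on_def by auto
  have add: "\<And>us vs x y. length us + length vs + 1 = 1 \<Longrightarrow> f (us @ (x + y) # vs) = f (us @ x # vs) + f (us @ y # vs)"
    using psi unfolding f_def LR_C1_def by simp
  have hom: "\<And>us vs x a. length us + length vs + 1 = 1 \<Longrightarrow> f (us @ smL a x # vs) = smM a (f (us @ x # vs))"
    using psi unfolding f_def LR_C1_def by simp
  define \<Phi> where "\<Phi> = liftM 1 f"
  define \<Omega> where "\<Omega> = (\<lambda>(x::'l) (X::'l multiset). (0::'m))"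
  have gp: "good_phi \<Phi>" unfolding \<Phi>_def by (rule liftM_good[OF alt add hom])
  have lp: "\<And>xs. length xs = 1 \<Longrightarrow> \<Phi> (mset xs) = f xs" unfolding \<Phi>_def by (rule liftM_list[OF alt add])
  have go: "good_omega \<Phi> \<Omega>"
    unfolding good_omega_def good_phi_def \<Omega>_def \<Phi>_def liftM_def by simp
  have r: "rep 2 (d1 \<rho> br sq \<psi>) (DM \<Phi>) (DeltaM \<Phi> \<Omega>)"
    unfolding rep_def d1_def
  proof (simp, intro conjI allI impI)
    fix xs :: "'l list" assume "length xs = 2"
    then have "dCE \<rho> br (\<lambda>xs. \<psi> (hd xs)) xs = dCE \<rho> br (\<lambda>xs. \<Phi> (mset xs)) xs"
      by (intro dCE_cong[of 1]) (simp_all add: lp f_def)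
    then show "dCE \<rho> br (\<lambda>xs. \<psi> (hd xs)) xs = DM \<Phi> (mset xs)" by (simp add: DM_list)
  next
    fix x
    have "DeltaM \<Phi> \<Omega> x {#} = deltaLR \<rho> br sq (\<lambda>xs. \<Phi> (mset xs)) (\<lambda>y zs. \<Omega> y (mset zs)) x []"
      using DeltaM_list[of \<Phi> \<Omega> x "[]"] by simp
    also have "\<dots> = \<rho> x (\<Phi> (mset [x])) + \<Phi> (mset [sq x])"
      unfolding deltaLR_def \<Omega>_def by simp
    also have "\<dots> = \<psi> (sq x) + \<rho> x (\<psi> x)" using lp[of "[x]"] lp[of "[sq x]"] by (simp add: f_def add.commute)
    finally show "\<psi> (sq x) + \<rho> x (\<psi> x) = DeltaM \<Phi> \<Omega> x {#}" by simp
  qed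
  have r1: "rep (2 + 1) (dLR \<rho> br sq (d1 \<rho> br sq \<psi>)) (DM (DM \<Phi>)) (DeltaM (DM \<Phi>) (DeltaM \<Phi> \<Omega>))"
    by (rule rep_d[OF r]) simp
  have "LR_cochain \<iota> smL smM 2 (d1 \<rho> br sq \<psi>)"
    by (rule rep_cochain[OF r _ DM_good[OF gp] Delta_good[OF gp go]]) simp
  moreover have "LR_zero 3 (dLR \<rho> br sq (d1 \<rho> br sq \<psi>))"
    using rep_zero[OF r1 DM_DM[OF gp] Delta_Delta[OF gp go]] by simp
  ultimately show ?thesis ..
qed

lemma part1: "LR_C1 smL smM (d0 \<rho> m) \<and> LR_zero 2 (d1 \<rho> br sq (d0 \<rho> m))"
proof
  show "LR_C1 smL smM (d0 \<rho> m)" unfolding LR_C1_def d0_def by (simp add: rho_sm)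
  have a: "dCE \<rho> br (\<lambda>xs. \<rho> (hd xs) m) xs = 0" if "length xs = 2" for xs :: "'l list"
  proof -
    have "\<exists>u v. xs = [u, v]" using that by (auto simp: numeral_2_eq_2 length_Suc_conv)
    then obtain u v where xs: "xs = [u, v]" by blast
    show ?thesis unfolding xs dCE_def del_def by (simp add: numeral_2_eq_2 lessThan_Suc rho_br add_ac)
  qed
  show "LR_zero 2 (d1 \<rho> br sq (d0 \<rho> m))"
    unfolding LR_zero_def d1_def d0_def using a by (simp add: rho_sq)
qed

end

theorem mainTheorem5:
  fixes \<iota> :: "'k::field \<Rightarrow> 'a::comm_ring_1"
    and smL :: "'a \<Rightarrow> 'l::ab_group_add \<Rightarrow> 'l"
    and br :: "'l \<Rightarrow> 'l \<Rightarrow> 'l" and sq :: "'l \<Rightarrow> 'l"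
    and \<theta> :: "'l \<Rightarrow> 'a \<Rightarrow> 'a"
    and smM :: "'a \<Rightarrow> 'm::ab_group_add \<Rightarrow> 'm"
    and \<rho> :: "'l \<Rightarrow> 'm \<Rightarrow> 'm"
  assumes "CHAR('k) = 2"
    and "restricted_LR_algebra \<iota> smL br sq \<theta>"
    and "restricted_LR_module \<iota> smL br sq \<theta> smM \<rho>"
  shows
    "(\<forall>m. LR_C1 smL smM (d0 \<rho> m) \<and> LR_zero 2 (d1 \<rho> br sq (d0 \<rho> m)))
     \<and> (\<forall>\<psi>. LR_C1 smL smM \<psi> \<longrightarrow>
          LR_cochain \<iota> smL smM 2 (d1 \<rho> br sq \<psi>) \<and>
          LR_zero 3 (dLR \<rho> br sq (d1 \<rho> br sq \<psi>)))
     \<and> (\<forall>n c. 2 \<le> n \<longrightarrow> LR_cochain \<iota> smL smM n c \<longrightarrow>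
          LR_cochain \<iota> smL smM (n + 1) (dLR \<rho> br sq c) \<and>
          LR_zero (n + 2) (dLR \<rho> br sq (dLR \<rho> br sq c)))"
proof -
  interpret LR \<iota> smL br sq \<theta> smM \<rho> using assms by unfold_locales
  show ?thesis using part1 part2 part3 by blast
qed

end
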